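(* Let $T_1^f$, $T_2^g$ be merge trees, $\delta>0$, and let $\hat T_1^f$, $\hat T_2^g$ be the augmented trees with respect to $\delta$. For any valid pair $(S,w)$, $F(S,w) = 1$ if and only if there is a partial-$\delta$-good map $\alpha: \mathcal{F}_1(S) \to T_2(w)$.
   Context: A merge tree $T^h$ is a finite rooted tree $T$ with a continuous function $h:|T|\to\mathbb{R}$ on its underlying space (interior points of edges included), decreasing along every root-to-leaf path, modified by attaching to the root a ray upward along which $h$ increases to $+\infty$. $u \succeq v$ means $u$ is an ancestor of $v$; $u^{\varepsilon}$ is the unique ancestor of $u$ with $h(u^\varepsilon) - h(u) = \varepsilon$. Tree nodes are vertices of $T$. The depth of a point $x$ is $\mathrm{depth}(x) = \max_{y \preceq x} (h(x) - h(y))$, the maximum over descendants $y$ of $x$. Let $T_1^f, T_2^g$ be merge trees and $\delta>0$. The level at height $c$ is the set of points of the tree with function value $c$. Let $C_1 = \{f(x): x \text{ a tree node of } T_1\}$, $C_2 = \{g(y): y \text{ a tree node of } T_2\}$. The superlevels of $T_1^f$ are the levels at heights in $C_1 \cup \{c-\delta: c\in C_2\}$, and those of $T_2^g$ are the levels at heights in $\{c+\delta : c \in C_1\} \cup C_2$. Sorting by height, they are $L^1_1,\dots,L^1_m$ with heights $h_1<\dots<h_m$ and $L^2_1,\dots,L^2_m$ with heights $\hat h_i = h_i + \delta$. The augmented tree $\hat T_1^f$ (resp. $\hat T_2^g$) is obtained from $T_1^f$ (resp. $T_2^g$) by adding all points of all its superlevels as (degree-2) nodes; $L^1_m$ and $L^2_m$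 each consist of the single node $\mathrm{root}(\hat T_1^f)$, $\mathrm{root}(\hat T_2^g)$. For a node $v$ on the $i$-th superlevel, $C(v)$ denotes its children in the augmented tree (all on the $(i-1)$-th superlevel); for a set $S$, $C(S)$ is the union of the children of its nodes. A pair $(S,w)$ with $w$ a node of $\hat T_2^g$ and $S$ a set of nodes of $\hat T_1^f$ is valid if for some $j$, $S \subseteq L^1_j$, $w \in L^2_j$, and all nodes of $S$ have the same ancestor at height $h_j + 2\delta$. The feasibility $F(S,w)\in\{0,1\}$ of valid pairs is defined by induction on the superlevel index $i$ of $(S,w)$: for $i=1$, $F(S,w)=1$ iff $\mathrm{depth}(w) \le 2\delta$. For $i>1$, let $C(w) = \{w_1,\dots,w_k\}$. If $C(w)=\emptyset$, $F(S,w)=1$ iff $C(S)=\emptyset$. Otherwise $F(S,w)=1$ iff there is a partition $C(S) = S_1 \cup \dots \cup S_k$ into pairwise disjoint, possibly empty sets such that for each $j \in [1,k]$: (F-1) if $S_j \ne \emptyset$ then $(S_j,w_j)$ is a valid pair with $F(S_j,w_j)=1$; (F-2) if $S_j = \emptyset$ then $\mathrm{depth}(w_j) \le 2\delta - (\hat h_i - \hat h_{i-1})$. $\mathcal{F}_1(S)$ is the forest consisting of all subtrees of $T_1^f$ rooted at nodes of $S$, and $T_2(w)$ is the subtree of $T_2^g$ rooted at $w$. For a valid pair $(S,w)$, a continuous map $\alpha: \mathcal{F}_1(S)\to T_2(w)$ is partial-$\delta$-good if: (P1) $g(\alpha(u)) = f(u)+\delta$ for all $u \in \mathcal{F}_1(S)$;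 (P2) for $u_1,u_2 \in \mathcal{F}_1(S)$ with $\alpha(u_1)\succeq\alpha(u_2)$, we have $u_1^{2\delta} \succeq u_2^{2\delta}$ in $T_1^f$; (P3) for every $z \in T_2(w)\setminus \mathrm{Im}(\alpha)$, $|g(z^F) - g(z)| \le 2\delta$, where $z^F$ is the lowest ancestor of $z$ in $\mathrm{Im}(\alpha)$. *)

theory Defs
  imports Main "HOL-Library.Extended_Real" Complex_Main
begin

text \<open>The height function is strictly increasing towards the root; along an edge it is
  a homeomorphism onto an interval, so a point of the underlying space is encoded
  as a pair (v, t): the point of height t on the edge from node v up to its parent
  (or on the ray above the root, if v is the root).\<close>

record 'a mtree =
  nodes :: "'a set"
  parent :: "'a \<Rightarrow> 'a"
  root :: 'a
  hgt :: "'a \<Rightarrow> real"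

definition merge_tree :: "'a mtree \<Rightarrow> bool" where
  "merge_tree T \<longleftrightarrow> finite (nodes T) \<and> root T \<in> nodes T \<and>
     (\<forall>v\<in>nodes T. v \<noteq> root T \<longrightarrow> parent T v \<in> nodes T \<and> hgt T v < hgt T (parent T v))"

definition pts :: "'a mtree \<Rightarrow> ('a \<times> real) set" where
  "pts T = {(v, t). v \<in> nodes T \<and> hgt T v \<le> t \<and> (v \<noteq> root T \<longrightarrow> t < hgt T (parent T v))}"

definition pstep :: "'a mtree \<Rightarrow> 'a \<Rightarrow> 'a" where
  "pstep T v = (if v = root T then v else parent T v)"

definition anc :: "'a mtree \<Rightarrow> 'a \<Rightarrow> 'a \<Rightarrow> bool" where
  "anc T u v \<longleftrightarrow> (\<exists>k. (pstep T ^^ k) v = u)"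

text \<open>Ancestor relation on points: pt_anc T x y means x \<succeq> y.\<close>
definition pt_anc :: "'a mtree \<Rightarrow> ('a \<times> real) \<Rightarrow> ('a \<times> real) \<Rightarrow> bool" where
  "pt_anc T x y \<longleftrightarrow> x \<in> pts T \<and> y \<in> pts T \<and> snd y \<le> snd x \<and> anc T (fst x) (fst y)"

text \<open>The ancestor of x at height c (so up T u (h u + eps) is u^eps).\<close>
definition up :: "'a mtree \<Rightarrow> ('a \<times> real) \<Rightarrow> real \<Rightarrow> ('a \<times> real)" where
  "up T x c = (THE y. pt_anc T y x \<and> snd y = c)"

definition depth :: "'a mtree \<Rightarrow> ('a \<times> real) \<Rightarrow> real" where
  "depth T x = Sup {snd x - snd y | y. pt_anc T x y}"

text \<open>Path metric on the underlying space (edge lengths = height differences).\<close>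
definition tdist :: "'a mtree \<Rightarrow> ('a \<times> real) \<Rightarrow> ('a \<times> real) \<Rightarrow> real" where
  "tdist T x y = (let c = Inf {snd z | z. pt_anc T z x \<and> pt_anc T z y} in (c - snd x) + (c - snd y))"

definition tcontinuous_on ::
  "'a mtree \<Rightarrow> 'b mtree \<Rightarrow> ('a \<times> real) set \<Rightarrow> (('a \<times> real) \<Rightarrow> ('b \<times> real)) \<Rightarrow> bool" where
  "tcontinuous_on T1 T2 A \<alpha> \<longleftrightarrow>
     (\<forall>x\<in>A. \<forall>e>0. \<exists>d>0. \<forall>y\<in>A. tdist T1 x y < d \<longrightarrow> tdist T2 (\<alpha> x) (\<alpha> y) < e)"

definition lev :: "'a mtree \<Rightarrow> real \<Rightarrow> ('a \<times> real) set" where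
  "lev T c = {x \<in> pts T. snd x = c}"

text \<open>Sorted heights h_1 < ... < h_m of the superlevels of T1 (0-based list);
  the superlevels of T2 have heights h_i + delta.\<close>
definition suplev_heights :: "'a mtree \<Rightarrow> 'b mtree \<Rightarrow> real \<Rightarrow> real list" where
  "suplev_heights T1 T2 \<delta> =
     sorted_list_of_set (hgt T1 ` nodes T1 \<union> (\<lambda>c. c - \<delta>) ` hgt T2 ` nodes T2)"

definition valid_pair :: "'a mtree \<Rightarrow> 'b mtree \<Rightarrow> real \<Rightarrow> ('a \<times> real) set \<Rightarrow> ('b \<times> real) \<Rightarrow> bool" where
  "valid_pair T1 T2 \<delta> S w \<longleftrightarrow> S \<noteq> {} \<and>
     (\<exists>j < length (suplev_heights T1 T2 \<delta>).
        S \<subseteq> lev T1 (suplev_heights T1 T2 \<delta> ! j) \<and>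
        w \<in> lev T2 (suplev_heights T1 T2 \<delta> ! j + \<delta>) \<and>
        (\<forall>x\<in>S. \<forall>y\<in>S. up T1 x (suplev_heights T1 T2 \<delta> ! j + 2 * \<delta>) =
                          up T1 y (suplev_heights T1 T2 \<delta> ! j + 2 * \<delta>)))"

text \<open>Feasibility at (0-based) superlevel index i.  Children in the augmented
  trees of nodes on superlevel i+1 are their descendants on superlevel i.\<close>
primrec feas :: "'a mtree \<Rightarrow> 'b mtree \<Rightarrow> real \<Rightarrow> nat \<Rightarrow> ('a \<times> real) set \<Rightarrow> ('b \<times> real) \<Rightarrow> bool" where
  "feas T1 T2 \<delta> 0 S w = (depth T2 w \<le> 2 * \<delta>)"
| "feas T1 T2 \<delta> (Suc i) S w =
    (let hs = suplev_heights T1 T2 \<delta>;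
         CW = {y \<in> lev T2 (hs ! i + \<delta>). pt_anc T2 w y};
         CS = {y \<in> lev T1 (hs ! i). \<exists>s\<in>S. pt_anc T1 s y}
     in if CW = {} then CS = {}
        else (\<exists>P :: ('b \<times> real) \<Rightarrow> ('a \<times> real) set.
                 \<Union>(P ` CW) = CS \<and>
                 (\<forall>a\<in>CW. \<forall>b\<in>CW. a \<noteq> b \<longrightarrow> P a \<inter> P b = {}) \<and>
                 (\<forall>wj\<in>CW.
                    (P wj \<noteq> {} \<longrightarrow> valid_pair T1 T2 \<delta> (P wj) wj \<and> feas T1 T2 \<delta> i (P wj) wj) \<and>
                    (P wj = {} \<longrightarrow>
                       depth T2 wj \<le> 2 * \<delta> - ((hs ! Suc i + \<delta>) - (hs ! i + \<delta>))))))"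

definition Feas :: "'a mtree \<Rightarrow> 'b mtree \<Rightarrow> real \<Rightarrow> ('a \<times> real) set \<Rightarrow> ('b \<times> real) \<Rightarrow> bool" where
  "Feas T1 T2 \<delta> S w =
     feas T1 T2 \<delta>
       (THE j. j < length (suplev_heights T1 T2 \<delta>) \<and> snd w = suplev_heights T1 T2 \<delta> ! j + \<delta>) S w"

definition forest :: "'a mtree \<Rightarrow> ('a \<times> real) set \<Rightarrow> ('a \<times> real) set" where
  "forest T S = {u \<in> pts T. \<exists>s\<in>S. pt_anc T s u}"

definition subtree :: "'a mtree \<Rightarrow> ('a \<times> real) \<Rightarrow> ('a \<times> real) set" where
  "subtree T w = {z \<in> pts T. pt_anc T w z}"

definition partial_good ::
  "'a mtree \<Rightarrow> 'b mtree \<Rightarrow> real \<Rightarrow> ('a \<times> real) set \<Rightarrow> ('b \<times> real) \<Rightarrow>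
   (('a \<times> real) \<Rightarrow> ('b \<times> real)) \<Rightarrow> bool" where
  "partial_good T1 T2 \<delta> S w \<alpha> \<longleftrightarrow>
     \<alpha> ` forest T1 S \<subseteq> subtree T2 w \<and>
     tcontinuous_on T1 T2 (forest T1 S) \<alpha> \<and>
     (\<forall>u\<in>forest T1 S. snd (\<alpha> u) = snd u + \<delta>) \<and>
     (\<forall>u1\<in>forest T1 S. \<forall>u2\<in>forest T1 S. pt_anc T2 (\<alpha> u1) (\<alpha> u2) \<longrightarrow>
        pt_anc T1 (up T1 u1 (snd u1 + 2 * \<delta>)) (up T1 u2 (snd u2 + 2 * \<delta>))) \<and>
     (\<forall>z\<in>subtree T2 w - \<alpha> ` forest T1 S.
        \<exists>zF. zF \<in> \<alpha> ` forest T1 S \<and> pt_anc T2 zF z \<and>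
             (\<forall>y\<in>\<alpha> ` forest T1 S. pt_anc T2 y z \<longrightarrow> pt_anc T2 y zF) \<and>
             \<bar>snd zF - snd z\<bar> \<le> 2 * \<delta>)"

end

theory Submission
  imports Defs "HOL-Analysis.Homotopy"
begin

context fixes T :: "'a mtree" assumes mt: "merge_tree T" begin

lemma fin: "finite (nodes T)" and root_in: "root T \<in> nodes T"
  and par: "v \<in> nodes T \<Longrightarrow> v \<noteq> root T \<Longrightarrow> parent T v \<in> nodes T \<and> hgt T v < hgt T (parent T v)"
  using mt unfolding merge_tree_def by auto

lemma pstep_in: "v \<in> nodes T \<Longrightarrow> pstep T v \<in> nodes T"
  using par unfolding pstep_def by auto

lemma pstep_hgt: "v \<in> nodes T \<Longrightarrow> hgt T v \<le> hgt T (pstep T v)"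
  using par unfolding pstep_def by (auto intro: less_imp_le)

lemma funpow_in: "v \<in> nodes T \<Longrightarrow> (pstep T ^^ k) v \<in> nodes T"
  by (induction k) (auto intro: pstep_in)

lemma funpow_hgt: "v \<in> nodes T \<Longrightarrow> hgt T v \<le> hgt T ((pstep T ^^ k) v)"
  by (induction k) (auto intro: order_trans pstep_hgt funpow_in)

lemma funpow_root: "(pstep T ^^ k) (root T) = root T"
  by (induction k) (auto simp: pstep_def)

lemma anc_refl: "anc T u u"
  unfolding anc_def by (rule exI[of _ 0]) simp

lemma anc_trans: "anc T a b \<Longrightarrow> anc T b c \<Longrightarrow> anc T a c"
  unfolding anc_def by (metis funpow_add o_apply)

lemma anc_parent: "anc T (pstep T v) v"
  unfolding anc_def by (rule exI[of _ 1]) simp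

lemma anc_in: "anc T u v \<Longrightarrow> v \<in> nodes T \<Longrightarrow> u \<in> nodes T \<and> hgt T v \<le> hgt T u"
  unfolding anc_def using funpow_in funpow_hgt by blast

lemma anc_strict: assumes "anc T u v" "v \<in> nodes T" "u \<noteq> v"
  shows "v \<noteq> root T \<and> anc T u (parent T v)"
proof -
  obtain k where k: "(pstep T ^^ k) v = u" using assms(1) unfolding anc_def by blast
  with assms(3) obtain m where m: "k = Suc m" by (cases k) auto
  have "v \<noteq> root T" using k assms(3) funpow_root by auto
  moreover have "(pstep T ^^ m) (pstep T v) = u" using k m by (metis funpow_Suc_right o_apply)
  ultimately show ?thesis unfolding anc_def pstep_def by auto
qed

lemma anc_strict_hgt: assumes "anc T u v" "v \<in> nodes T" "u \<noteq> v"
  shows "v \<noteq> root T \<and> hgt T (parent T v) \<le> hgt T u \<and> hgt T v < hgt T u"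
proof -
  have a: "v \<noteq> root T" "anc T u (parent T v)" using anc_strict[OF assms] by auto
  have "parent T v \<in> nodes T" "hgt T v < hgt T (parent T v)" using par[OF assms(2) a(1)] by auto
  with anc_in[OF a(2)] a show ?thesis by auto
qed

lemma anc_antisym: "anc T u v \<Longrightarrow> anc T v u \<Longrightarrow> v \<in> nodes T \<Longrightarrow> u = v"
  by (metis anc_in anc_strict_hgt not_le)

lemma anc_chain: assumes "anc T a v" "anc T b v" shows "anc T a b \<or> anc T b a"
proof -
  obtain k where k: "(pstep T ^^ k) v = a" using assms(1) unfolding anc_def by blast
  obtain m where m: "(pstep T ^^ m) v = b" using assms(2) unfolding anc_def by blast
  show ?thesis
  proof (cases "k \<le> m")
    case True
    then have "(pstep T ^^ (m - k)) a = b" using k m by (metis funpow_add le_add_diff_inverse2 o_apply)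
    then show ?thesis unfolding anc_def by blast
  next
    case False
    then have "(pstep T ^^ (k - m)) b = a" using k m
      by (metis funpow_add le_add_diff_inverse2 nat_le_linear o_apply)
    then show ?thesis unfolding anc_def by blast
  qed
qed

lemma anc_root: "v \<in> nodes T \<Longrightarrow> anc T (root T) v"
proof (induction "card {u \<in> nodes T. hgt T v < hgt T u}" arbitrary: v rule: less_induct)
  case less
  show ?case
  proof (cases "v = root T")
    case True then show ?thesis by (simp add: anc_refl)
  next
    case False
    let ?p = "parent T v"
    have p: "?p \<in> nodes T" "hgt T v < hgt T ?p" using par[OF less.prems False] by auto
    have "{u \<in> nodes T. hgt T ?p < hgt T u} \<subset> {u \<in> nodes T. hgt T v < hgt T u}"
      using p by auto
    moreover have "finite {u \<in> nodes T. hgt T v < hgt T u}" using fin by simp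
    ultimately have "card {u \<in> nodes T. hgt T ?p < hgt T u} < card {u \<in> nodes T. hgt T v < hgt T u}"
      by (intro psubset_card_mono)
    then have "anc T (root T) ?p" using less.hyps p(1) by blast
    moreover have "anc T ?p v" using anc_parent[of v] False by (simp add: pstep_def)
    ultimately show ?thesis by (rule anc_trans)
  qed
qed

lemma pts_iff: "(v, t) \<in> pts T \<longleftrightarrow> v \<in> nodes T \<and> hgt T v \<le> t \<and> (v \<noteq> root T \<longrightarrow> t < hgt T (parent T v))"
  unfolding pts_def by auto

lemma pts_D: "x \<in> pts T \<Longrightarrow> fst x \<in> nodes T \<and> hgt T (fst x) \<le> snd x \<and> (fst x \<noteq> root T \<longrightarrow> snd x < hgt T (parent T (fst x)))"
  unfolding pts_def by auto

lemma pt_anc_D: "pt_anc T x y \<Longrightarrow> x \<in> pts T \<and> y \<in> pts T \<and> snd y \<le> snd x \<and> anc T (fst x) (fst y)"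
  unfolding pt_anc_def by auto

lemma pt_anc_same: assumes "pt_anc T x y" "hgt T (fst x) \<le> snd y" shows "fst y = fst x"
proof (rule ccontr)
  assume ne: "fst y \<noteq> fst x"
  have a: "anc T (fst x) (fst y)" "y \<in> pts T" using assms(1) by (auto simp: pt_anc_def)
  have "fst y \<in> nodes T" using a(2) pts_D by blast
  from anc_strict_hgt[OF a(1) this] ne have "fst y \<noteq> root T" "hgt T (parent T (fst y)) \<le> hgt T (fst x)" by auto
  with pts_D[OF a(2)] assms(2) show False by auto
qed

lemma pt_anc_refl: "x \<in> pts T \<Longrightarrow> pt_anc T x x"
  unfolding pt_anc_def by (simp add: anc_refl)

lemma pt_anc_trans: "pt_anc T x y \<Longrightarrow> pt_anc T y z \<Longrightarrow> pt_anc T x z"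
  unfolding pt_anc_def by (auto intro: anc_trans)

lemma pt_anc_antisym: assumes "pt_anc T x y" "pt_anc T y x" shows "x = y"
proof -
  have "snd x = snd y" using assms by (auto simp: pt_anc_def)
  moreover have "fst x = fst y" using assms pts_D[of y] anc_antisym[of "fst x" "fst y"] by (auto simp: pt_anc_def)
  ultimately show ?thesis by (simp add: prod_eq_iff)
qed

lemma pt_anc_chain: assumes "pt_anc T a x" "pt_anc T b x" "snd b \<le> snd a" shows "pt_anc T a b"
proof -
  have A: "a \<in> pts T" "b \<in> pts T" "anc T (fst a) (fst x)" "anc T (fst b) (fst x)"
    using assms by (auto simp: pt_anc_def)
  show ?thesis
  proof (cases "anc T (fst a) (fst b)")
    case True then show ?thesis using A assms(3) by (simp add: pt_anc_def)
  next
    case False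
    then have "anc T (fst b) (fst a)" using anc_chain[OF A(3,4)] by blast
    moreover have "fst a \<in> nodes T" using A pts_D by blast
    ultimately have "fst b = fst a \<or> (fst a \<noteq> root T \<and> hgt T (parent T (fst a)) \<le> hgt T (fst b))"
      using anc_strict_hgt by blast
    then show ?thesis using False pts_D[OF A(1)] pts_D[OF A(2)] assms(3) by (auto simp: anc_refl)
  qed
qed

lemma up_ex: assumes "x \<in> pts T" "snd x \<le> c" shows "\<exists>y. pt_anc T y x \<and> snd y = c"
proof -
  let ?A = "{a \<in> nodes T. anc T a (fst x) \<and> hgt T a \<le> c}"
  have fx: "fst x \<in> ?A" using pts_D[OF assms(1)] assms(2) anc_refl by auto
  have finA: "finite ?A" using fin by auto
  have "Max (hgt T ` ?A) \<in> hgt T ` ?A" using fx finA by (intro Max_in) auto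
  then obtain a where a: "a \<in> ?A" "hgt T a = Max (hgt T ` ?A)" by auto
  have "a \<noteq> root T \<longrightarrow> c < hgt T (parent T a)"
  proof
    assume ar: "a \<noteq> root T"
    show "c < hgt T (parent T a)"
    proof (rule ccontr)
      assume "\<not> ?thesis"
      then have "parent T a \<in> ?A" using par[of a] a ar anc_trans[OF anc_parent[of a]] by (auto simp: pstep_def)
      then have "hgt T (parent T a) \<le> hgt T a" using a finA by auto
      with par[of a] a ar show False by auto
    qed
  qed
  then have "(a, c) \<in> pts T" using a by (auto simp: pts_def)
  then show ?thesis using a assms by (intro exI[of _ "(a,c)"]) (auto simp: pt_anc_def)
qed

lemma up_unique: "pt_anc T y x \<Longrightarrow> pt_anc T y' x \<Longrightarrow> snd y = snd y' \<Longrightarrow> y = y'"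
  by (metis order_refl pt_anc_antisym pt_anc_chain)

lemma up_prop: assumes "x \<in> pts T" "snd x \<le> c" shows "pt_anc T (up T x c) x" "snd (up T x c) = c"
proof -
  have "\<exists>!y. pt_anc T y x \<and> snd y = c" using up_ex[OF assms] up_unique by blast
  then have "pt_anc T (up T x c) x \<and> snd (up T x c) = c" unfolding up_def by (rule theI')
  then show "pt_anc T (up T x c) x" "snd (up T x c) = c" by auto
qed

lemma up_eq: "pt_anc T y x \<Longrightarrow> up T x (snd y) = y"
  unfolding up_def using up_unique by blast

lemma up_self: "x \<in> pts T \<Longrightarrow> up T x (snd x) = x"
  using up_eq pt_anc_refl by blast

lemma up_pts: "x \<in> pts T \<Longrightarrow> snd x \<le> c \<Longrightarrow> up T x c \<in> pts T"
  using up_prop pt_anc_D by blast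

lemma up_mono: "pt_anc T a b \<Longrightarrow> snd a \<le> c \<Longrightarrow> up T b c = up T a c"
  by (metis pt_anc_D pt_anc_trans up_eq up_prop(1,2))

lemma tdist_anc: assumes "pt_anc T a b"
  shows "tdist T a b = snd a - snd b" "tdist T b a = snd a - snd b"
proof -
  have aa: "pt_anc T a a" using assms pt_anc_D pt_anc_refl by blast
  have "Inf {snd z | z. pt_anc T z a \<and> pt_anc T z b} = snd a"
    using assms aa by (intro cInf_eq_minimum) (blast, auto simp: pt_anc_def)
  moreover have "Inf {snd z | z. pt_anc T z b \<and> pt_anc T z a} = snd a"
    using assms aa by (intro cInf_eq_minimum) (blast, auto simp: pt_anc_def)
  ultimately show "tdist T a b = snd a - snd b" "tdist T b a = snd a - snd b"
    unfolding tdist_def Let_def by auto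
qed

lemma root_pt_anc: "x \<in> pts T \<Longrightarrow> hgt T (root T) \<le> M \<Longrightarrow> snd x \<le> M \<Longrightarrow> pt_anc T (root T, M) x"
  using anc_root[of "fst x"] pts_D[of x] root_in by (auto simp: pt_anc_def pts_def)

lemma LC: assumes x: "x \<in> pts T"
  shows "\<exists>e>0. \<forall>y\<in>pts T. tdist T x y < e \<longrightarrow> pt_anc T x y \<or> pt_anc T y x"
proof -
  define e where "e = (if fst x = root T then 1 else hgt T (parent T (fst x)) - snd x)"
  have e0: "e > 0" using pts_D[OF x] by (auto simp: e_def)
  have "\<forall>y\<in>pts T. tdist T x y < e \<longrightarrow> pt_anc T x y \<or> pt_anc T y x"
  proof (intro ballI impI)
    fix y assume y: "y \<in> pts T" and td: "tdist T x y < e"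
    define C where "C = {snd z | z. pt_anc T z x \<and> pt_anc T z y}"
    define M where "M = max (max (snd x) (snd y)) (hgt T (root T))"
    have "pt_anc T (root T, M) x" "pt_anc T (root T, M) y"
      using root_pt_anc[OF x, of M] root_pt_anc[OF y, of M] by (auto simp: M_def)
    then have "snd (root T, M) \<in> C" unfolding C_def by blast
    then have Cne: "C \<noteq> {}" by auto
    have td2: "tdist T x y = (Inf C - snd x) + (Inf C - snd y)"
      unfolding tdist_def C_def Let_def by simp
    have "Inf C < Inf C + (e - tdist T x y) / 2" using td by simp
    then obtain c where "c \<in> C" "c < Inf C + (e - tdist T x y) / 2"
      using cInf_lessD[OF Cne] by blast
    then obtain z where z: "pt_anc T z x" "pt_anc T z y" "snd z < Inf C + (e - tdist T x y) / 2"
      unfolding C_def by blast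
    have "bdd_below C" unfolding C_def bdd_below_def using pt_anc_D by blast
    moreover have "snd z \<in> C" using z unfolding C_def by blast
    ultimately have "Inf C \<le> snd z" by (intro cInf_lower)
    have "snd y \<le> Inf C" using Cne unfolding C_def by (intro cInf_greatest) (auto simp: pt_anc_def)
    have "snd x \<le> snd z" using pt_anc_D[OF z(1)] by blast
    have "2 * snd z < 2 * Inf C + (e - tdist T x y)" using z(3) by (simp add: field_simps)
    have "snd z - snd x < e" using \<open>2 * snd z < 2 * Inf C + (e - tdist T x y)\<close> td2 \<open>snd y \<le> Inf C\<close> td \<open>Inf C \<le> snd z\<close> by linarith
    have fz: "fst z = fst x"
    proof (rule ccontr)
      assume "fst z \<noteq> fst x"
      hence "fst z \<noteq> fst x" by simp
      then have "fst x \<noteq> root T \<and> hgt T (parent T (fst x)) \<le> hgt T (fst z)"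
        using anc_strict_hgt pt_anc_D[OF z(1)] pts_D[OF x] by metis
      moreover have "hgt T (fst z) \<le> snd z" using pts_D[of z] pt_anc_D[OF z(1)] by blast
      ultimately show False using \<open>snd z - snd x < e\<close> by (auto simp: e_def)
    qed
    show "pt_anc T x y \<or> pt_anc T y x"
    proof (cases "snd x \<le> snd y")
      case True
      then have "fst y = fst x" using pt_anc_same[OF z(2)] fz pts_D[OF x] by auto
      then have "pt_anc T y x" using True x y by (auto simp: pt_anc_def anc_refl)
      then show ?thesis by blast
    next
      case False
      let ?u = "up T y (snd x)"
      have u: "pt_anc T ?u y" "snd ?u = snd x" using up_prop[OF y] False by auto
      have "pt_anc T z ?u" using pt_anc_chain[OF z(2) u(1)] u(2) pt_anc_D[OF z(1)] by auto
      then have "fst ?u = fst x" using pt_anc_same fz pts_D[OF x] u(2) by metis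
      then have "?u = x" using u(2) by (simp add: prod_eq_iff)
      then show ?thesis using u by auto
    qed
  qed
  then show ?thesis using e0 by blast
qed

lemma depth_le: assumes "x \<in> pts T" "\<And>y. pt_anc T x y \<Longrightarrow> snd x - snd y \<le> B" shows "depth T x \<le> B"
  unfolding depth_def using assms pt_anc_refl[OF assms(1)] by (intro cSup_least) blast+

lemma depth_ge: assumes "pt_anc T x y" shows "snd x - snd y \<le> depth T x"
proof -
  have "\<forall>z. pt_anc T x z \<longrightarrow> snd x - snd z \<le> snd x - Min (hgt T ` nodes T)"
  proof (intro allI impI)
    fix z assume "pt_anc T x z"
    then have "z \<in> pts T" by (simp add: pt_anc_def)
    then have "Min (hgt T ` nodes T) \<le> hgt T (fst z)" "hgt T (fst z) \<le> snd z" using pts_D fin by auto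
    then show "snd x - snd z \<le> snd x - Min (hgt T ` nodes T)" by linarith
  qed
  then have "bdd_above {snd x - snd y | y. pt_anc T x y}" unfolding bdd_above_def by blast
  moreover have "snd x - snd y \<in> {snd x - snd y | y. pt_anc T x y}" using assms by blast
  ultimately show ?thesis unfolding depth_def by (intro cSup_upper)
qed

end


lemma hs_finite: "finite (hgt T1 ` nodes T1 \<union> (\<lambda>c. c - \<delta>) ` hgt T2 ` nodes T2)"
  if "merge_tree T1" "merge_tree T2" using fin[OF that(1)] fin[OF that(2)] by auto

context fixes T1 :: "'a mtree" and T2 :: "'b mtree" and \<delta> :: real
  assumes mt1: "merge_tree T1" and mt2: "merge_tree T2"
begin

abbreviation "hs \<equiv> suplev_heights T1 T2 \<delta>"

lemma hs_set: "set hs = hgt T1 ` nodes T1 \<union> (\<lambda>c. c - \<delta>) ` hgt T2 ` nodes T2"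
  unfolding suplev_heights_def using hs_finite[OF mt1 mt2] by simp

lemma hs_strict: "sorted_wrt (<) hs"
  unfolding suplev_heights_def by (rule strict_sorted_list_of_set)

lemma hs_lt: "i < j \<Longrightarrow> j < length hs \<Longrightarrow> hs ! i < hs ! j"
  using sorted_wrt_nth_less[OF hs_strict] by blast

lemma hs_le: "i \<le> j \<Longrightarrow> j < length hs \<Longrightarrow> hs ! i \<le> hs ! j"
  using hs_lt by (cases "i = j") (auto intro: less_imp_le)

lemma hs_inj: "i < length hs \<Longrightarrow> j < length hs \<Longrightarrow> hs ! i = hs ! j \<Longrightarrow> i = j"
  using hs_lt by (metis linorder_neqE_nat order_less_irrefl)

lemma hs_gap: assumes "Suc i < length hs" "x \<in> set hs" shows "x \<le> hs ! i \<or> hs ! Suc i \<le> x"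
proof -
  obtain k where k: "k < length hs" "x = hs ! k" using assms(2) by (metis in_set_conv_nth)
  show ?thesis
  proof (cases "k \<le> i")
    case True then show ?thesis using hs_le k assms by auto
  next
    case False then show ?thesis using hs_le k assms by auto
  qed
qed

lemma hs_min: "x \<in> set hs \<Longrightarrow> hs ! 0 \<le> x"
  by (metis hs_le in_set_conv_nth le0)

lemma T1_h: "v \<in> nodes T1 \<Longrightarrow> hgt T1 v \<in> set hs" using hs_set by auto
lemma T2_h: "v \<in> nodes T2 \<Longrightarrow> hgt T2 v - \<delta> \<in> set hs" using hs_set by auto

lemma T1_gap: assumes "u \<in> pts T1" "Suc i < length hs" "snd u < hs ! Suc i"
  shows "hgt T1 (fst u) \<le> hs ! i"
  using hs_gap[OF assms(2) T1_h] pts_D[OF mt1 assms(1)] assms(3) by fastforce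

lemma T1_min: "u \<in> pts T1 \<Longrightarrow> hs ! 0 \<le> snd u"
  using hs_min[OF T1_h] pts_D[OF mt1] by fastforce

lemma T2_gap: assumes "z \<in> pts T2" "Suc i < length hs" "snd z < hs ! Suc i + \<delta>"
  shows "hgt T2 (fst z) \<le> hs ! i + \<delta>"
  using hs_gap[OF assms(2) T2_h] pts_D[OF mt2 assms(1)] assms(3) by fastforce

lemma T2_min: "z \<in> pts T2 \<Longrightarrow> hs ! 0 + \<delta> \<le> snd z"
  using hs_min[OF T2_h] pts_D[OF mt2] by fastforce

end


context fixes T1 :: "'a mtree" and T2 :: "'b mtree"
  assumes mt1: "merge_tree T1" and mt2: "merge_tree T2"
begin

lemma OP:
  assumes cont: "tcontinuous_on T1 T2 F \<alpha>" and ht: "\<forall>u\<in>F. snd (\<alpha> u) = snd u + \<delta>"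
    and im: "\<alpha> ` F \<subseteq> pts T2" and xF: "x \<in> F" and yx: "pt_anc T1 y x"
    and seg: "\<And>t. snd x \<le> t \<Longrightarrow> t \<le> snd y \<Longrightarrow> up T1 x t \<in> F"
  shows "pt_anc T2 (\<alpha> y) (\<alpha> x)"
proof -
  define a where "a = snd x"
  define b where "b = snd y"
  define p where "p t = up T1 x t" for t
  define \<psi> where "\<psi> t = up T2 (\<alpha> (p t)) (b + \<delta>)" for t
  have x: "x \<in> pts T1" and ab: "a \<le> b" using pt_anc_D[OF mt1 yx] by (auto simp: a_def b_def)
  have pF: "p t \<in> F" and px: "pt_anc T1 (p t) x" and ps: "snd (p t) = t"
    and pa: "\<alpha> (p t) \<in> pts T2" and pah: "snd (\<alpha> (p t)) = t + \<delta>"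
    if "t \<in> {a..b}" for t
  proof -
    show "p t \<in> F" using seg that by (auto simp: p_def a_def b_def)
    show "pt_anc T1 (p t) x" "snd (p t) = t" using up_prop[OF mt1 x] that by (auto simp: p_def a_def)
    show "\<alpha> (p t) \<in> pts T2" using im \<open>p t \<in> F\<close> by auto
    show "snd (\<alpha> (p t)) = t + \<delta>" using ht \<open>p t \<in> F\<close> \<open>snd (p t) = t\<close> by auto
  qed
  have "\<psi> a = \<psi> b"
  proof (rule connected_equivalence_relation[of "{a..b}" a b "\<lambda>u v. \<psi> u = \<psi> v"])
    show "connected {a..b}" by simp
    show "a \<in> {a..b}" "b \<in> {a..b}" using ab by auto
  next
    fix t assume t: "t \<in> {a..b}"
    obtain e where e: "e > 0" "\<forall>z\<in>pts T2. tdist T2 (\<alpha> (p t)) z < e \<longrightarrow>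
        pt_anc T2 (\<alpha> (p t)) z \<or> pt_anc T2 z (\<alpha> (p t))"
      using LC[OF mt2 pa[OF t]] by blast
    obtain d where d: "d > 0" "\<forall>y\<in>F. tdist T1 (p t) y < d \<longrightarrow> tdist T2 (\<alpha> (p t)) (\<alpha> y) < e"
      using cont pF[OF t] e(1) unfolding tcontinuous_on_def by blast
    show "\<exists>T. openin (top_of_set {a..b}) T \<and> t \<in> T \<and> (\<forall>x\<in>T. \<psi> t = \<psi> x)"
    proof (intro exI conjI ballI)
      show "openin (top_of_set {a..b}) ({a..b} \<inter> ball t d)" by (intro openin_open_Int) auto
      show "t \<in> {a..b} \<inter> ball t d" using t d by auto
    next
      fix t' assume t': "t' \<in> {a..b} \<inter> ball t d"
      then have t'1: "t' \<in> {a..b}" and dd: "\<bar>t - t'\<bar> < d" by (auto simp: dist_real_def)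
      have cmp: "pt_anc T1 (p t) (p t') \<or> pt_anc T1 (p t') (p t)"
        using pt_anc_chain[OF mt1 px[OF t] px[OF t'1]] pt_anc_chain[OF mt1 px[OF t'1] px[OF t]]
        ps[OF t] ps[OF t'1] by linarith
      have "tdist T1 (p t) (p t') = \<bar>t - t'\<bar>"
        using cmp
      proof
        assume h: "pt_anc T1 (p t) (p t')"
        show ?thesis using tdist_anc(1)[OF mt1 h] pt_anc_D[OF mt1 h] ps[OF t] ps[OF t'1] by auto
      next
        assume h: "pt_anc T1 (p t') (p t)"
        show ?thesis using tdist_anc(2)[OF mt1 h] pt_anc_D[OF mt1 h] ps[OF t] ps[OF t'1] by auto
      qed
      then have "tdist T2 (\<alpha> (p t)) (\<alpha> (p t')) < e" using d pF[OF t'1] dd by auto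
      then have "pt_anc T2 (\<alpha> (p t)) (\<alpha> (p t')) \<or> pt_anc T2 (\<alpha> (p t')) (\<alpha> (p t))"
        using e pa[OF t'1] by blast
      moreover have "t + \<delta> \<le> b + \<delta>" "t' + \<delta> \<le> b + \<delta>" using t t'1 by auto
      ultimately show "\<psi> t = \<psi> t'" unfolding \<psi>_def
        using up_mono[OF mt2, of "\<alpha> (p t)" "\<alpha> (p t')"] up_mono[OF mt2, of "\<alpha> (p t')" "\<alpha> (p t)"]
          pah[OF t] pah[OF t'1] by auto
    qed
  qed auto
  moreover have "p b = y" using up_eq[OF mt1 yx] by (simp add: p_def b_def)
  moreover have "p a = x" using up_self[OF mt1 x] by (simp add: p_def a_def)
  moreover have ba: "b \<in> {a..b}" "a \<in> {a..b}" using ab by auto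
  ultimately have e1: "up T2 (\<alpha> x) (b + \<delta>) = up T2 (\<alpha> y) (b + \<delta>)" unfolding \<psi>_def by simp
  have "\<alpha> y \<in> pts T2" "snd (\<alpha> y) = b + \<delta>" using pa[OF ba(1)] pah[OF ba(1)] \<open>p b = y\<close> by auto
  then have "up T2 (\<alpha> y) (b + \<delta>) = \<alpha> y" using up_self[OF mt2] by metis
  moreover have "\<alpha> x \<in> pts T2" "snd (\<alpha> x) \<le> b + \<delta>" using pa[OF ba(2)] pah[OF ba(2)] \<open>p a = x\<close> ab by auto
  ultimately show ?thesis using up_prop(1)[OF mt2] e1 by metis
qed

end


definition vp_at :: "'a mtree \<Rightarrow> 'b mtree \<Rightarrow> real \<Rightarrow> nat \<Rightarrow> ('a \<times> real) set \<Rightarrow> ('b \<times> real) \<Rightarrow> bool" where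
  "vp_at T1 T2 \<delta> i S w \<longleftrightarrow> i < length (suplev_heights T1 T2 \<delta>) \<and> S \<noteq> {} \<and>
     S \<subseteq> lev T1 (suplev_heights T1 T2 \<delta> ! i) \<and> w \<in> lev T2 (suplev_heights T1 T2 \<delta> ! i + \<delta>) \<and>
     (\<forall>x\<in>S. \<forall>y\<in>S. up T1 x (suplev_heights T1 T2 \<delta> ! i + 2 * \<delta>) = up T1 y (suplev_heights T1 T2 \<delta> ! i + 2 * \<delta>))"

definition goodP :: "'a mtree \<Rightarrow> 'b mtree \<Rightarrow> real \<Rightarrow> nat \<Rightarrow> ('a \<times> real) set \<Rightarrow> ('b \<times> real)
   \<Rightarrow> (('b \<times> real) \<Rightarrow> ('a \<times> real) set) \<Rightarrow> bool" where
  "goodP T1 T2 \<delta> i S w P =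
    (let hs = suplev_heights T1 T2 \<delta>;
         CW = {y \<in> lev T2 (hs ! i + \<delta>). pt_anc T2 w y};
         CS = {y \<in> lev T1 (hs ! i). \<exists>s\<in>S. pt_anc T1 s y}
     in \<Union>(P ` CW) = CS \<and>
                 (\<forall>a\<in>CW. \<forall>b\<in>CW. a \<noteq> b \<longrightarrow> P a \<inter> P b = {}) \<and>
                 (\<forall>wj\<in>CW.
                    (P wj \<noteq> {} \<longrightarrow> valid_pair T1 T2 \<delta> (P wj) wj \<and> feas T1 T2 \<delta> i (P wj) wj) \<and>
                    (P wj = {} \<longrightarrow>
                       depth T2 wj \<le> 2 * \<delta> - ((hs ! Suc i + \<delta>) - (hs ! i + \<delta>)))))"

lemma feas_Suc_iff: "feas T1 T2 \<delta> (Suc i) S w \<longleftrightarrow> (\<exists>P. goodP T1 T2 \<delta> i S w P)"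
  unfolding goodP_def feas.simps Let_def by auto

context fixes T1 :: "'a mtree" and T2 :: "'b mtree" and \<delta> :: real
  assumes mt1: "merge_tree T1" and mt2: "merge_tree T2" and dpos: "\<delta> > 0"
begin

lemma vp_valid: "vp_at T1 T2 \<delta> i S w \<Longrightarrow> valid_pair T1 T2 \<delta> S w"
  unfolding vp_at_def valid_pair_def by blast

lemma valid_vp: assumes "valid_pair T1 T2 \<delta> S w" "i < length (hs T1 T2 \<delta>)"
   "snd w = hs T1 T2 \<delta> ! i + \<delta>" shows "vp_at T1 T2 \<delta> i S w"
proof -
  obtain j where j: "j < length (hs T1 T2 \<delta>)" "S \<noteq> {}" "S \<subseteq> lev T1 (hs T1 T2 \<delta> ! j)"
    "w \<in> lev T2 (hs T1 T2 \<delta> ! j + \<delta>)"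
    "\<forall>x\<in>S. \<forall>y\<in>S. up T1 x (hs T1 T2 \<delta> ! j + 2 * \<delta>) = up T1 y (hs T1 T2 \<delta> ! j + 2 * \<delta>)"
    using assms(1) unfolding valid_pair_def by blast
  have "hs T1 T2 \<delta> ! j = hs T1 T2 \<delta> ! i" using j(4) assms(3) by (auto simp: lev_def)
  then have "j = i" using hs_inj[OF mt1 mt2] j(1) assms(2) by blast
  then show ?thesis using j unfolding vp_at_def by blast
qed

lemma base_case: assumes vp: "vp_at T1 T2 \<delta> 0 S w"
  shows "feas T1 T2 \<delta> 0 S w" and "\<exists>\<alpha>. partial_good T1 T2 \<delta> S w \<alpha>"
proof -
  let ?h = "hs T1 T2 \<delta> ! 0"
  have w: "w \<in> pts T2" "snd w = ?h + \<delta>" and Sne: "S \<noteq> {}" and Sl: "S \<subseteq> lev T1 ?h"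
    and Sup: "\<forall>x\<in>S. \<forall>y\<in>S. up T1 x (?h + 2 * \<delta>) = up T1 y (?h + 2 * \<delta>)"
  proof -
    have "S \<noteq> {} \<and> S \<subseteq> lev T1 ?h \<and> w \<in> lev T2 (?h + \<delta>) \<and>
      (\<forall>x\<in>S. \<forall>y\<in>S. up T1 x (?h + 2 * \<delta>) = up T1 y (?h + 2 * \<delta>))"
      using vp unfolding vp_at_def by blast
    then show "w \<in> pts T2" "snd w = ?h + \<delta>" "S \<noteq> {}" "S \<subseteq> lev T1 ?h"
      "\<forall>x\<in>S. \<forall>y\<in>S. up T1 x (?h + 2 * \<delta>) = up T1 y (?h + 2 * \<delta>)"
      unfolding lev_def by blast+
  qed
  have sub_w: "z = w" if "pt_anc T2 w z" for z
  proof -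
    have "z \<in> pts T2" "snd z \<le> snd w" using pt_anc_D[OF mt2 that] by auto
    then have "snd z = snd w" using T2_min[OF mt1 mt2, where \<delta>=\<delta>] w(2) by fastforce
    then show ?thesis using up_eq[OF mt2 that] up_self[OF mt2 \<open>z \<in> pts T2\<close>] by simp
  qed
  have "depth T2 w \<le> 2 * \<delta>"
  proof (rule depth_le[OF mt2 w(1)])
    fix y assume "pt_anc T2 w y"
    then have "y = w" by (rule sub_w)
    then show "snd w - snd y \<le> 2 * \<delta>" using dpos by simp
  qed
  then show "feas T1 T2 \<delta> 0 S w" by simp
  have fS: "u \<in> S" if uf: "u \<in> forest T1 S" for u
  proof -
    obtain s where s: "s \<in> S" "pt_anc T1 s u" "u \<in> pts T1" using uf unfolding forest_def by blast
    have "snd s = ?h" using s Sl by (auto simp: lev_def)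
    then have "snd u = snd s" using T1_min[OF mt1 mt2 s(3), where \<delta>=\<delta>] pt_anc_D[OF mt1 s(2)] by fastforce
    then have "u = s" using up_eq[OF mt1 s(2)] up_self[OF mt1 s(3)] by simp
    then show ?thesis using s by simp
  qed
  have Sf: "S \<subseteq> forest T1 S" using Sl pt_anc_refl[OF mt1] unfolding forest_def lev_def by auto
  have fw: "(\<lambda>_. w) ` forest T1 S = {w}" using Sne Sf by auto
  have "partial_good T1 T2 \<delta> S w (\<lambda>_. w)"
    unfolding partial_good_def
  proof (intro conjI ballI impI)
    show "(\<lambda>_. w) ` forest T1 S \<subseteq> subtree T2 w" using fw w pt_anc_refl[OF mt2] by (auto simp: subtree_def)
    show "tcontinuous_on T1 T2 (forest T1 S) (\<lambda>_. w)"
      unfolding tcontinuous_on_def using tdist_anc(1)[OF mt2 pt_anc_refl[OF mt2 w(1)]] by auto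
  next
    fix u assume "u \<in> forest T1 S"
    then have "u \<in> S" by (rule fS)
    then show "snd w = snd u + \<delta>" using w Sl by (auto simp: lev_def)
  next
    fix u1 u2 assume u: "u1 \<in> forest T1 S" "u2 \<in> forest T1 S"
    then have u': "u1 \<in> S" "u2 \<in> S" using fS by auto
    then have "snd u1 = ?h" "snd u2 = ?h" "u1 \<in> pts T1" using Sl by (auto simp: lev_def)
    moreover have "up T1 u1 (?h + 2 * \<delta>) \<in> pts T1" using up_pts[OF mt1 \<open>u1 \<in> pts T1\<close>] dpos
      \<open>snd u1 = ?h\<close> by auto
    moreover have "up T1 u1 (?h + 2 * \<delta>) = up T1 u2 (?h + 2 * \<delta>)" using Sup u' by blast
    ultimately show "pt_anc T1 (up T1 u1 (snd u1 + 2 * \<delta>)) (up T1 u2 (snd u2 + 2 * \<delta>))"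
      using pt_anc_refl[OF mt1] by simp
  next
    fix z assume z: "z \<in> subtree T2 w - (\<lambda>_. w) ` forest T1 S"
    then have "z = w" using sub_w by (auto simp: subtree_def)
    then have False using z fw by auto
    then show "\<exists>zF. zF \<in> (\<lambda>_. w) ` forest T1 S \<and> pt_anc T2 zF z \<and>
             (\<forall>y\<in>(\<lambda>_. w) ` forest T1 S. pt_anc T2 y z \<longrightarrow> pt_anc T2 y zF) \<and> \<bar>snd zF - snd z\<bar> \<le> 2 * \<delta>"
      by blast
  qed
  then show "\<exists>\<alpha>. partial_good T1 T2 \<delta> S w \<alpha>" by blast
qed

end


locale stp = fixes T1 :: "'a mtree" and T2 :: "'b mtree" and \<delta> :: real and i :: nat
    and S :: "('a \<times> real) set" and w :: "'b \<times> real"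
  assumes mt1: "merge_tree T1" and mt2: "merge_tree T2" and dpos: "\<delta> > 0"
    and Si: "Suc i < length (hs T1 T2 \<delta>)" and vp: "vp_at T1 T2 \<delta> (Suc i) S w"
begin

abbreviation "h \<equiv> hs T1 T2 \<delta> ! Suc i"
abbreviation "h' \<equiv> hs T1 T2 \<delta> ! i"
definition "CW = {y \<in> lev T2 (h' + \<delta>). pt_anc T2 w y}"
definition "CS = {y \<in> lev T1 h'. \<exists>s\<in>S. pt_anc T1 s y}"
abbreviation "F \<equiv> forest T1 S"

lemma hh: "h' < h" using hs_lt[OF mt1 mt2 _ Si] by simp

lemma Sfacts: "w \<in> pts T2" "snd w = h + \<delta>" "S \<noteq> {}" "S \<subseteq> lev T1 h"
      "\<forall>x\<in>S. \<forall>y\<in>S. up T1 x (h + 2 * \<delta>) = up T1 y (h + 2 * \<delta>)"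
proof -
  have "S \<noteq> {} \<and> S \<subseteq> lev T1 h \<and> w \<in> lev T2 (h + \<delta>) \<and>
    (\<forall>x\<in>S. \<forall>y\<in>S. up T1 x (h + 2 * \<delta>) = up T1 y (h + 2 * \<delta>))"
    using vp unfolding vp_at_def by blast
  then show "w \<in> pts T2" "snd w = h + \<delta>" "S \<noteq> {}" "S \<subseteq> lev T1 h"
    "\<forall>x\<in>S. \<forall>y\<in>S. up T1 x (h + 2 * \<delta>) = up T1 y (h + 2 * \<delta>)"
    unfolding lev_def by blast+
qed

lemma S_pts: "s \<in> S \<Longrightarrow> s \<in> pts T1 \<and> snd s = h"
  using Sfacts(4) unfolding lev_def by blast

lemma F1: assumes "u \<in> F" shows "u \<in> pts T1 \<and> snd u \<le> h \<and> (\<exists>s\<in>S. pt_anc T1 s u)"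
proof -
  obtain s where s: "s \<in> S" "pt_anc T1 s u" "u \<in> pts T1" using assms unfolding forest_def by blast
  have "snd u \<le> snd s" using pt_anc_D[OF mt1 s(2)] by blast
  then show ?thesis using s S_pts[OF s(1)] by auto
qed

lemma S_F: "S \<subseteq> F"
  unfolding forest_def using S_pts pt_anc_refl[OF mt1] by blast

lemma F_anc: assumes "u \<in> F" "pt_anc T1 u v" shows "v \<in> F"
proof -
  obtain s where s: "s \<in> S" "pt_anc T1 s u" using assms(1) unfolding forest_def by blast
  have "pt_anc T1 s v" by (rule pt_anc_trans[OF mt1 s(2) assms(2)])
  moreover have "v \<in> pts T1" using pt_anc_D[OF mt1 assms(2)] by blast
  ultimately show ?thesis using s(1) unfolding forest_def by blast
qed

lemma F_up: assumes "u \<in> F" "snd u \<le> t" "t \<le> h" shows "up T1 u t \<in> F"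
proof -
  obtain s where s: "s \<in> S" "pt_anc T1 s u" using F1[OF assms(1)] by blast
  have u: "u \<in> pts T1" using F1[OF assms(1)] by blast
  have "pt_anc T1 s (up T1 u t)"
    using pt_anc_chain[OF mt1 s(2) up_prop(1)[OF mt1 u assms(2)]] up_prop(2)[OF mt1 u assms(2)]
      S_pts[OF s(1)] assms(3) by simp
  then show ?thesis unfolding forest_def using s(1) pt_anc_D[OF mt1] by blast
qed

lemma CS_F: "c \<in> CS \<Longrightarrow> c \<in> F \<and> snd c = h' \<and> c \<in> pts T1"
  unfolding CS_def forest_def lev_def by blast

lemma F2: assumes "u \<in> F" "snd u \<le> h'" shows "up T1 u h' \<in> CS" "pt_anc T1 (up T1 u h') u"
proof -
  have u: "u \<in> pts T1" using F1[OF assms(1)] by blast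
  show "pt_anc T1 (up T1 u h') u" using up_prop(1)[OF mt1 u assms(2)] .
  have "up T1 u h' \<in> F" using F_up[OF assms] hh by simp
  then show "up T1 u h' \<in> CS" unfolding CS_def lev_def forest_def
    using up_prop(2)[OF mt1 u assms(2)] by blast
qed

lemma F3: assumes "u \<in> F" "h' < snd u" "snd u < h"
  shows "(fst u, h') \<in> CS" "pt_anc T1 u (fst u, h')" "hgt T1 (fst u) \<le> h'"
proof -
  have u: "u \<in> pts T1" using F1[OF assms(1)] by blast
  show hl: "hgt T1 (fst u) \<le> h'" using T1_gap[OF mt1 mt2 u Si] assms(3) by blast
  have "(fst u, h') \<in> pts T1" using pts_D[OF mt1 u] hl assms(2) by (auto simp: pts_def)
  then show pa: "pt_anc T1 u (fst u, h')" using u assms(2) by (auto simp: pt_anc_def anc_refl[OF mt1] anc_refl[OF mt2])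
  then have "(fst u, h') \<in> F" using F_anc[OF assms(1)] by blast
  then show "(fst u, h') \<in> CS" unfolding CS_def lev_def forest_def by auto
qed

lemma F4: assumes "u \<in> F" "snd u = h" shows "u \<in> S"
proof -
  obtain s where s: "s \<in> S" "pt_anc T1 s u" using F1[OF assms(1)] by blast
  have e1: "up T1 u (snd s) = s" by (rule up_eq[OF mt1 s(2)])
  have e2: "up T1 u (snd u) = u" using up_self[OF mt1] F1[OF assms(1)] by blast
  have "snd s = snd u" using S_pts[OF s(1)] assms(2) by simp
  then have "u = s" using e1 e2 by metis
  then show ?thesis using s by simp
qed

lemma W1: assumes "z \<in> subtree T2 w" shows "z \<in> pts T2 \<and> snd z \<le> h + \<delta> \<and> pt_anc T2 w z"
proof -
  have z: "z \<in> pts T2" "pt_anc T2 w z" using assms unfolding subtree_def by blast+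
  have "snd z \<le> snd w" using pt_anc_D[OF mt2 z(2)] by blast
  then show ?thesis using z Sfacts(2) by simp
qed

lemma CW_W: "wj \<in> CW \<Longrightarrow> wj \<in> subtree T2 w \<and> snd wj = h' + \<delta> \<and> wj \<in> pts T2 \<and> pt_anc T2 w wj"
  unfolding CW_def subtree_def lev_def by blast

lemma sub_trans: assumes "z \<in> subtree T2 wj" "pt_anc T2 w wj" shows "z \<in> subtree T2 w"
proof -
  have z: "z \<in> pts T2" "pt_anc T2 wj z" using assms(1) unfolding subtree_def by blast+
  show ?thesis using pt_anc_trans[OF mt2 assms(2) z(2)] z(1) unfolding subtree_def by blast
qed

lemma W2: assumes "z \<in> subtree T2 w" "snd z \<le> h' + \<delta>"
  shows "up T2 z (h' + \<delta>) \<in> CW" "pt_anc T2 (up T2 z (h' + \<delta>)) z"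
proof -
  have z: "z \<in> pts T2" "pt_anc T2 w z" using W1[OF assms(1)] by auto
  show u: "pt_anc T2 (up T2 z (h' + \<delta>)) z" using up_prop(1)[OF mt2 z(1) assms(2)] .
  have "pt_anc T2 w (up T2 z (h' + \<delta>))"
    using pt_anc_chain[OF mt2 z(2) u] up_prop(2)[OF mt2 z(1) assms(2)] Sfacts(2) hh by simp
  then show "up T2 z (h' + \<delta>) \<in> CW" unfolding CW_def lev_def
    using up_prop(2)[OF mt2 z(1) assms(2)] pt_anc_D[OF mt2 u] by blast
qed

lemma W3: assumes "z \<in> subtree T2 w" "h' + \<delta> < snd z" "snd z < h + \<delta>"
  shows "(fst z, h' + \<delta>) \<in> CW" "pt_anc T2 z (fst z, h' + \<delta>)" "hgt T2 (fst z) \<le> h' + \<delta>"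
proof -
  have z: "z \<in> pts T2" "pt_anc T2 w z" using W1[OF assms(1)] by auto
  show hl: "hgt T2 (fst z) \<le> h' + \<delta>" using T2_gap[OF mt1 mt2 z(1) Si] assms(3) by blast
  have "(fst z, h' + \<delta>) \<in> pts T2" using pts_D[OF mt2 z(1)] hl assms(2) by (auto simp: pts_def)
  then show pa: "pt_anc T2 z (fst z, h' + \<delta>)" using z assms(2) by (auto simp: pt_anc_def anc_refl[OF mt1] anc_refl[OF mt2])
  then show "(fst z, h' + \<delta>) \<in> CW" unfolding CW_def lev_def
    using pt_anc_trans[OF mt2 z(2) pa] \<open>(fst z, h' + \<delta>) \<in> pts T2\<close> by auto
qed

lemma W4: assumes "z \<in> subtree T2 w" "snd z = h + \<delta>" shows "z = w"
proof -
  have z: "z \<in> pts T2" "pt_anc T2 w z" using W1[OF assms(1)] by auto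
  have e1: "up T2 z (snd w) = w" by (rule up_eq[OF mt2 z(2)])
  have e2: "up T2 z (snd z) = z" using up_self[OF mt2 z(1)] .
  have "snd w = snd z" using Sfacts(2) assms(2) by simp
  then show ?thesis using e1 e2 by metis
qed

lemma Wgap: assumes "x \<in> pts T2" "snd x < h + \<delta>" "pt_anc T2 x y1" "pt_anc T2 x y2"
  "snd y1 = h' + \<delta>" "snd y2 = h' + \<delta>" shows "y1 = y2"
proof -
  have "hgt T2 (fst x) \<le> h' + \<delta>" using T2_gap[OF mt1 mt2 assms(1) Si] assms(2) by blast
  then have "fst y1 = fst x" "fst y2 = fst x"
    using pt_anc_same[OF mt2 assms(3)] pt_anc_same[OF mt2 assms(4)] assms(5,6) by simp_all
  then show ?thesis using assms(5,6) by (simp add: prod_eq_iff)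
qed

lemma Sgap: assumes "x \<in> pts T1" "snd x < h" "pt_anc T1 x y" "h' \<le> snd y" shows "fst y = fst x"
proof -
  have "hgt T1 (fst x) \<le> h'" using T1_gap[OF mt1 mt2 assms(1) Si] assms(2) by blast
  then show ?thesis using pt_anc_same[OF mt1 assms(3)] assms(4) by simp
qed

lemma forest_mono: assumes "P \<subseteq> CS" shows "forest T1 P \<subseteq> F"
proof
  fix u assume "u \<in> forest T1 P"
  then obtain c where c: "c \<in> P" "pt_anc T1 c u" unfolding forest_def by blast
  have "c \<in> F" using CS_F c(1) assms by blast
  then show "u \<in> F" using F_anc c(2) by blast
qed

lemma vp_sub: assumes "P \<noteq> {}" "P \<subseteq> CS" "wj \<in> CW"
  "\<And>c1 c2. c1 \<in> P \<Longrightarrow> c2 \<in> P \<Longrightarrow> up T1 c1 (h' + 2 * \<delta>) = up T1 c2 (h' + 2 * \<delta>)"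
  shows "vp_at T1 T2 \<delta> i P wj"
proof -
  have "P \<subseteq> lev T1 h'" using assms(2) unfolding CS_def by blast
  moreover have "wj \<in> lev T2 (h' + \<delta>)" using assms(3) unfolding CW_def by blast
  moreover have "i < length (hs T1 T2 \<delta>)" using Si by simp
  ultimately show ?thesis unfolding vp_at_def using assms(1,4) by blast
qed

end


context stp begin

lemma goodP_iff: "goodP T1 T2 \<delta> i S w P \<longleftrightarrow>
   \<Union>(P ` CW) = CS \<and> (\<forall>a\<in>CW. \<forall>b\<in>CW. a \<noteq> b \<longrightarrow> P a \<inter> P b = {}) \<and>
   (\<forall>wj\<in>CW. (P wj \<noteq> {} \<longrightarrow> valid_pair T1 T2 \<delta> (P wj) wj \<and> feas T1 T2 \<delta> i (P wj) wj) \<and>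
      (P wj = {} \<longrightarrow> depth T2 wj \<le> 2 * \<delta> - ((h + \<delta>) - (h' + \<delta>))))"
  unfolding goodP_def CW_def CS_def Let_def by (rule refl)

lemma bwd:
  assumes IH: "\<And>S' w'. vp_at T1 T2 \<delta> i S' w' \<Longrightarrow> feas T1 T2 \<delta> i S' w' \<longleftrightarrow> (\<exists>\<alpha>. partial_good T1 T2 \<delta> S' w' \<alpha>)"
    and good: "partial_good T1 T2 \<delta> S w \<alpha>"
  shows "\<exists>P. goodP T1 T2 \<delta> i S w P"
proof -
  have im: "\<alpha> ` F \<subseteq> subtree T2 w" and cont: "tcontinuous_on T1 T2 F \<alpha>"
    and ht: "\<forall>u\<in>F. snd (\<alpha> u) = snd u + \<delta>"
    and P2: "\<And>u1 u2. u1 \<in> F \<Longrightarrow> u2 \<in> F \<Longrightarrow> pt_anc T2 (\<alpha> u1) (\<alpha> u2) \<Longrightarrow>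
        pt_anc T1 (up T1 u1 (snd u1 + 2 * \<delta>)) (up T1 u2 (snd u2 + 2 * \<delta>))"
    and P3: "\<And>z. z \<in> subtree T2 w - \<alpha> ` F \<Longrightarrow>
        \<exists>zF. zF \<in> \<alpha> ` F \<and> pt_anc T2 zF z \<and>
             (\<forall>y\<in>\<alpha> ` F. pt_anc T2 y z \<longrightarrow> pt_anc T2 y zF) \<and>
             \<bar>snd zF - snd z\<bar> \<le> 2 * \<delta>"
    using good unfolding partial_good_def by blast+
  have imp: "\<alpha> ` F \<subseteq> pts T2" using im W1 by blast
  have OPF: "pt_anc T2 (\<alpha> y) (\<alpha> x)" if "x \<in> F" "y \<in> F" "pt_anc T1 y x" for x y
  proof (rule OP[OF mt1 mt2 cont ht imp that(1,3)])
    fix t assume "snd x \<le> t" "t \<le> snd y"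
    moreover have "snd y \<le> h" using F1[OF that(2)] by blast
    ultimately show "up T1 x t \<in> F" using F_up[OF that(1)] by simp
  qed
  have aC: "\<alpha> c \<in> CW" if "c \<in> CS" for c
  proof -
    have c: "c \<in> F" "snd c = h'" using CS_F[OF that] by auto
    have "\<alpha> c \<in> subtree T2 w" using im c by blast
    then show ?thesis unfolding CW_def lev_def subtree_def using ht c by auto
  qed
  have Z: "snd u \<le> h' \<and> up T1 u h' \<in> CS \<and> \<alpha> (up T1 u h') = wj"
    if u: "u \<in> F" and wj: "wj \<in> CW" and a: "pt_anc T2 wj (\<alpha> u)" for u wj
  proof -
    have w1: "snd wj = h' + \<delta>" "wj \<in> pts T2" using CW_W[OF wj] by auto
    have "snd (\<alpha> u) \<le> snd wj" using pt_anc_D[OF mt2 a] by blast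
    then have su: "snd u \<le> h'" using ht u w1 by auto
    let ?c = "up T1 u h'"
    have c: "?c \<in> CS" "pt_anc T1 ?c u" using F2[OF u su] by auto
    have cF: "?c \<in> F" using CS_F[OF c(1)] by blast
    have "pt_anc T2 (\<alpha> ?c) (\<alpha> u)" using OPF[OF u cF c(2)] .
    moreover have "snd (\<alpha> ?c) = snd wj" using ht cF CS_F[OF c(1)] w1 by auto
    ultimately have "\<alpha> ?c = wj" using up_unique[OF mt2 _ a] by blast
    then show ?thesis using su c by blast
  qed
  define P where "P wj = {c \<in> CS. \<alpha> c = wj}" for wj
  have PCS: "P wj \<subseteq> CS" for wj unfolding P_def by blast
  have Pchar: "u \<in> forest T1 (P wj) \<longleftrightarrow> u \<in> F \<and> pt_anc T2 wj (\<alpha> u)" if wj: "wj \<in> CW" for u wj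
  proof
    assume "u \<in> forest T1 (P wj)"
    then obtain c where c: "c \<in> P wj" "pt_anc T1 c u" "u \<in> pts T1" unfolding forest_def by blast
    have cF: "c \<in> F" and ac: "\<alpha> c = wj" using c(1) CS_F unfolding P_def by auto
    have uF: "u \<in> F" using F_anc[OF cF c(2)] .
    show "u \<in> F \<and> pt_anc T2 wj (\<alpha> u)" using OPF[OF uF cF c(2)] ac uF by simp
  next
    assume a: "u \<in> F \<and> pt_anc T2 wj (\<alpha> u)"
    then have z: "snd u \<le> h' \<and> up T1 u h' \<in> CS \<and> \<alpha> (up T1 u h') = wj" using Z wj by blast
    then have "up T1 u h' \<in> P wj" unfolding P_def by blast
    moreover have "pt_anc T1 (up T1 u h') u" using F2 a z by blast
    ultimately show "u \<in> forest T1 (P wj)" unfolding forest_def using F1 a by blast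
  qed
  have good_sub: "partial_good T1 T2 \<delta> (P wj) wj \<alpha>" if wj: "wj \<in> CW" "P wj \<noteq> {}" for wj
  proof -
    let ?Fj = "forest T1 (P wj)"
    have FjF: "?Fj \<subseteq> F" using Pchar[OF wj(1)] by blast
    have wjw: "pt_anc T2 w wj" "wj \<in> pts T2" using CW_W[OF wj(1)] by auto
    obtain c0 where c0: "c0 \<in> P wj" using wj(2) by blast
    have c0F: "c0 \<in> F" "\<alpha> c0 = wj" using c0 CS_F unfolding P_def by auto
    have wjim: "wj \<in> \<alpha> ` ?Fj" using c0F Pchar[OF wj(1), of c0] pt_anc_refl[OF mt2 wjw(2)] by force
    show ?thesis unfolding partial_good_def
    proof (intro conjI ballI)
      show "\<alpha> ` ?Fj \<subseteq> subtree T2 wj" unfolding subtree_def using Pchar[OF wj(1)] imp by blast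
      show "tcontinuous_on T1 T2 ?Fj \<alpha>" using cont FjF unfolding tcontinuous_on_def by blast
      show "\<And>u. u \<in> ?Fj \<Longrightarrow> snd (\<alpha> u) = snd u + \<delta>" using ht FjF by blast
      show "\<And>u1 u2. u1 \<in> ?Fj \<Longrightarrow> u2 \<in> ?Fj \<Longrightarrow> pt_anc T2 (\<alpha> u1) (\<alpha> u2) \<longrightarrow>
         pt_anc T1 (up T1 u1 (snd u1 + 2 * \<delta>)) (up T1 u2 (snd u2 + 2 * \<delta>))"
        using P2 FjF by blast
    next
      fix z assume z: "z \<in> subtree T2 wj - \<alpha> ` ?Fj"
      have zw: "z \<in> subtree T2 w" using sub_trans z wjw by blast
      have zwj: "pt_anc T2 wj z" using z unfolding subtree_def by blast
      have "z \<notin> \<alpha> ` F"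
      proof
        assume "z \<in> \<alpha> ` F"
        then obtain u where "u \<in> F" "z = \<alpha> u" by blast
        then have "u \<in> ?Fj" using Pchar[OF wj(1)] zwj by blast
        then show False using z \<open>z = \<alpha> u\<close> by blast
      qed
      then obtain zF where zF: "zF \<in> \<alpha> ` F" "pt_anc T2 zF z"
          "\<forall>y\<in>\<alpha> ` F. pt_anc T2 y z \<longrightarrow> pt_anc T2 y zF" "\<bar>snd zF - snd z\<bar> \<le> 2 * \<delta>"
        using P3 zw by blast
      have "wj \<in> \<alpha> ` F" using wjim FjF by blast
      then have "pt_anc T2 wj zF" using zF(3) zwj by blast
      moreover obtain u where u: "u \<in> F" "zF = \<alpha> u" using zF(1) by blast
      ultimately have "u \<in> ?Fj" using Pchar[OF wj(1)] by blast
      then have "zF \<in> \<alpha> ` ?Fj" using u by blast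
      then show "\<exists>zF. zF \<in> \<alpha> ` ?Fj \<and> pt_anc T2 zF z \<and>
             (\<forall>y\<in>\<alpha> ` ?Fj. pt_anc T2 y z \<longrightarrow> pt_anc T2 y zF) \<and> \<bar>snd zF - snd z\<bar> \<le> 2 * \<delta>"
        using zF FjF by blast
    qed
  qed
  have vp_subP: "vp_at T1 T2 \<delta> i (P wj) wj" if wj: "wj \<in> CW" "P wj \<noteq> {}" for wj
  proof (rule vp_sub[OF wj(2) PCS wj(1)])
    fix c1 c2 assume c: "c1 \<in> P wj" "c2 \<in> P wj"
    have cF: "c1 \<in> F" "c2 \<in> F" "\<alpha> c1 = wj" "\<alpha> c2 = wj" "snd c1 = h'" "snd c2 = h'"
      using c CS_F unfolding P_def by auto
    have wp: "pt_anc T2 wj wj" using CW_W[OF wj(1)] pt_anc_refl[OF mt2] by blast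
    have "pt_anc T1 (up T1 c1 (snd c1 + 2 * \<delta>)) (up T1 c2 (snd c2 + 2 * \<delta>))"
      using P2[OF cF(1,2)] wp cF by simp
    moreover have "pt_anc T1 (up T1 c2 (snd c2 + 2 * \<delta>)) (up T1 c1 (snd c1 + 2 * \<delta>))"
      using P2[OF cF(2,1)] wp cF by simp
    ultimately show "up T1 c1 (h' + 2 * \<delta>) = up T1 c2 (h' + 2 * \<delta>)"
      using pt_anc_antisym[OF mt1] cF by metis
  qed
  have depthP: "depth T2 wj \<le> 2 * \<delta> - ((h + \<delta>) - (h' + \<delta>))" if wj: "wj \<in> CW" "P wj = {}" for wj
  proof -
    have wj1: "snd wj = h' + \<delta>" "wj \<in> pts T2" "pt_anc T2 w wj" using CW_W[OF wj(1)] by auto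
    show ?thesis
    proof (rule depth_le[OF mt2 wj1(2)])
      fix y assume y: "pt_anc T2 wj y"
      have yw: "y \<in> subtree T2 w" using sub_trans[OF _ wj1(3)] y pt_anc_D[OF mt2 y]
        unfolding subtree_def by blast
      have noP: False if "u \<in> F" "pt_anc T2 wj (\<alpha> u)" for u
      proof -
        have "up T1 u h' \<in> P wj" using Z[OF that(1) wj(1) that(2)] unfolding P_def by blast
        then show False using wj(2) by blast
      qed
      have "y \<notin> \<alpha> ` F" using noP y by blast
      then obtain zF where zF: "zF \<in> \<alpha> ` F" "pt_anc T2 zF y" "\<bar>snd zF - snd y\<bar> \<le> 2 * \<delta>"
        using P3 yw by blast
      obtain u where u: "u \<in> F" "zF = \<alpha> u" using zF(1) by blast
      have zFw: "zF \<in> subtree T2 w" using im u by blast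
      have zF1: "zF \<in> pts T2" "snd zF \<le> h + \<delta>" using W1[OF zFw] by auto
      have "snd zF = h + \<delta>"
      proof (rule ccontr)
        assume ne: "snd zF \<noteq> h + \<delta>"
        show False
        proof (cases "snd zF \<le> h' + \<delta>")
          case True
          then have "pt_anc T2 wj zF" using pt_anc_chain[OF mt2 y zF(2)] wj1 by simp
          then show False using noP u by blast
        next
          case False
          have su: "h' < snd u" "snd u < h" using False ne zF1 ht u by auto
          have c: "(fst u, h') \<in> CS" "pt_anc T1 u (fst u, h')" using F3[OF u(1) su] by auto
          have cF: "(fst u, h') \<in> F" using CS_F[OF c(1)] by blast
          have "pt_anc T2 zF (\<alpha> (fst u, h'))" using OPF[OF cF u(1) c(2)] u by simp
          moreover have "pt_anc T2 zF wj" using pt_anc_chain[OF mt2 zF(2) y] wj1 False by simp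
          moreover have "snd (\<alpha> (fst u, h')) = h' + \<delta>" using ht cF by simp
          ultimately have "\<alpha> (fst u, h') = wj"
            using Wgap[OF zF1(1) _ _ _ _ wj1(1)] zF1 ne by fastforce
          then have "(fst u, h') \<in> P wj" using c unfolding P_def by blast
          then show False using wj(2) by blast
        qed
      qed
      then show "snd wj - snd y \<le> 2 * \<delta> - ((h + \<delta>) - (h' + \<delta>))" using zF(3) wj1 by linarith
    qed
  qed
  have "goodP T1 T2 \<delta> i S w P"
    unfolding goodP_iff
  proof (intro conjI ballI impI)
    show "\<Union>(P ` CW) = CS" using aC unfolding P_def by blast
    show "\<And>a b. a \<in> CW \<Longrightarrow> b \<in> CW \<Longrightarrow> a \<noteq> b \<Longrightarrow> P a \<inter> P b = {}" unfolding P_def by blast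
    fix wj assume wj: "wj \<in> CW"
    { assume ne: "P wj \<noteq> {}"
      show "valid_pair T1 T2 \<delta> (P wj) wj" using vp_valid[OF mt1 mt2 dpos vp_subP[OF wj ne]] .
      show "feas T1 T2 \<delta> i (P wj) wj" using IH[OF vp_subP[OF wj ne]] good_sub[OF wj ne] by blast }
    { assume "P wj = {}"
      then show "depth T2 wj \<le> 2 * \<delta> - ((h + \<delta>) - (h' + \<delta>))" using depthP wj by blast }
  qed
  then show ?thesis by blast
qed

end


locale stpf = stp +
  fixes P :: "'b \<times> real \<Rightarrow> ('a \<times> real) set"
  assumes gP: "goodP T1 T2 \<delta> i S w P"
    and IH: "\<And>S' w'. vp_at T1 T2 \<delta> i S' w' \<Longrightarrow> feas T1 T2 \<delta> i S' w' \<longleftrightarrow> (\<exists>\<alpha>. partial_good T1 T2 \<delta> S' w' \<alpha>)"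
begin

definition "A wj = (SOME \<alpha>. partial_good T1 T2 \<delta> (P wj) wj \<alpha>)"
definition "sel c = (SOME wj. wj \<in> CW \<and> c \<in> P wj)"
definition "al u = (if snd u \<le> h' then A (sel (up T1 u h')) u
   else if snd u < h then up T2 (sel (fst u, h')) (snd u + \<delta>) else w)"

lemma G: "\<Union>(P ` CW) = CS \<and> (\<forall>a\<in>CW. \<forall>b\<in>CW. a \<noteq> b \<longrightarrow> P a \<inter> P b = {}) \<and>
   (\<forall>wj\<in>CW. (P wj \<noteq> {} \<longrightarrow> valid_pair T1 T2 \<delta> (P wj) wj \<and> feas T1 T2 \<delta> i (P wj) wj) \<and>
      (P wj = {} \<longrightarrow> depth T2 wj \<le> 2 * \<delta> - ((h + \<delta>) - (h' + \<delta>))))"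
  using gP unfolding goodP_iff .

lemma U: "\<Union>(P ` CW) = CS" using G by (rule conjunct1)
lemma D: "\<And>a b. a \<in> CW \<Longrightarrow> b \<in> CW \<Longrightarrow> a \<noteq> b \<Longrightarrow> P a \<inter> P b = {}"
  using G[THEN conjunct2, THEN conjunct1] by blast
lemma G1: "\<And>wj. wj \<in> CW \<Longrightarrow> P wj \<noteq> {} \<Longrightarrow> valid_pair T1 T2 \<delta> (P wj) wj \<and> feas T1 T2 \<delta> i (P wj) wj"
  using G[THEN conjunct2, THEN conjunct2] by blast
lemma G2: "\<And>wj. wj \<in> CW \<Longrightarrow> P wj = {} \<Longrightarrow> depth T2 wj \<le> 2 * \<delta> - ((h + \<delta>) - (h' + \<delta>))"
  using G[THEN conjunct2, THEN conjunct2] by blast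

lemma P_CS: "wj \<in> CW \<Longrightarrow> P wj \<subseteq> CS" using U by blast

lemma vpP: assumes "wj \<in> CW" "P wj \<noteq> {}" shows "vp_at T1 T2 \<delta> i (P wj) wj"
proof -
  have "i < length (hs T1 T2 \<delta>)" using Si by simp
  moreover have "snd wj = h' + \<delta>" using CW_W[OF assms(1)] by blast
  ultimately show ?thesis using valid_vp[OF mt1 mt2 dpos] G1[OF assms] by blast
qed

lemma A_good: assumes "wj \<in> CW" "P wj \<noteq> {}" shows "partial_good T1 T2 \<delta> (P wj) wj (A wj)"
proof -
  have "\<exists>\<alpha>. partial_good T1 T2 \<delta> (P wj) wj \<alpha>" using IH[OF vpP[OF assms]] G1[OF assms] by blast
  then show ?thesis unfolding A_def by (rule someI_ex)
qed

lemma Pups: assumes "wj \<in> CW" "c1 \<in> P wj" "c2 \<in> P wj"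
  shows "up T1 c1 (h' + 2 * \<delta>) = up T1 c2 (h' + 2 * \<delta>)"
  using vpP[OF assms(1)] assms(2,3) unfolding vp_at_def by blast

lemma sel_ok: assumes "c \<in> CS" shows "sel c \<in> CW \<and> c \<in> P (sel c)"
proof -
  have "\<exists>wj. wj \<in> CW \<and> c \<in> P wj" using assms U by blast
  then show ?thesis unfolding sel_def by (rule someI_ex)
qed

lemma sel_eq: assumes "wj \<in> CW" "c \<in> P wj" shows "sel c = wj"
proof -
  have "c \<in> CS" using P_CS assms by blast
  then have "sel c \<in> CW" "c \<in> P (sel c)" using sel_ok by auto
  then show ?thesis using D assms by blast
qed

context fixes wj assumes wj: "wj \<in> CW" and ne: "P wj \<noteq> {}"
begin
lemma A_im: "u \<in> forest T1 (P wj) \<Longrightarrow> A wj u \<in> subtree T2 wj"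
  and A_cont: "tcontinuous_on T1 T2 (forest T1 (P wj)) (A wj)"
  and A_ht: "u \<in> forest T1 (P wj) \<Longrightarrow> snd (A wj u) = snd u + \<delta>"
  and A_P2: "u1 \<in> forest T1 (P wj) \<Longrightarrow> u2 \<in> forest T1 (P wj) \<Longrightarrow> pt_anc T2 (A wj u1) (A wj u2) \<Longrightarrow>
        pt_anc T1 (up T1 u1 (snd u1 + 2 * \<delta>)) (up T1 u2 (snd u2 + 2 * \<delta>))"
  and A_P3: "z \<in> subtree T2 wj - A wj ` forest T1 (P wj) \<Longrightarrow>
        \<exists>zF. zF \<in> A wj ` forest T1 (P wj) \<and> pt_anc T2 zF z \<and>
             (\<forall>y\<in>A wj ` forest T1 (P wj). pt_anc T2 y z \<longrightarrow> pt_anc T2 y zF) \<and>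
             \<bar>snd zF - snd z\<bar> \<le> 2 * \<delta>"
  using A_good[OF wj ne] unfolding partial_good_def by blast+
end

lemma A_c: assumes "wj \<in> CW" "c \<in> P wj" shows "A wj c = wj"
proof -
  have ne: "P wj \<noteq> {}" using assms by blast
  have c: "c \<in> pts T1" "snd c = h'" using CS_F P_CS assms by blast+
  have "c \<in> forest T1 (P wj)" unfolding forest_def using assms(2) c pt_anc_refl[OF mt1] by blast
  then have "A wj c \<in> subtree T2 wj" "snd (A wj c) = h' + \<delta>"
    using A_im[OF assms(1) ne] A_ht[OF assms(1) ne] c by auto
  moreover have "snd wj = h' + \<delta>" "wj \<in> pts T2" using CW_W[OF assms(1)] by auto
  ultimately have a: "pt_anc T2 wj (A wj c)" "A wj c \<in> pts T2" "snd (A wj c) = snd wj"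
    unfolding subtree_def by auto
  show ?thesis using up_unique[OF mt2 a(1) pt_anc_refl[OF mt2 a(2)] a(3)[symmetric]] by simp
qed

lemma low: assumes u: "u \<in> F" "snd u \<le> h'"
  shows "sel (up T1 u h') \<in> CW" "up T1 u h' \<in> P (sel (up T1 u h'))"
    "u \<in> forest T1 (P (sel (up T1 u h')))" "al u = A (sel (up T1 u h')) u"
proof -
  have c: "up T1 u h' \<in> CS" "pt_anc T1 (up T1 u h') u" using F2[OF u] by auto
  show "sel (up T1 u h') \<in> CW" "up T1 u h' \<in> P (sel (up T1 u h'))" using sel_ok[OF c(1)] by auto
  then show "u \<in> forest T1 (P (sel (up T1 u h')))" unfolding forest_def using c(2) F1[OF u(1)] by blast
  show "al u = A (sel (up T1 u h')) u" using u(2) unfolding al_def by simp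
qed

lemma low': assumes wj: "wj \<in> CW" and u: "u \<in> forest T1 (P wj)"
  shows "u \<in> F" "snd u \<le> h'" "sel (up T1 u h') = wj" "al u = A wj u"
proof -
  obtain c where c: "c \<in> P wj" "pt_anc T1 c u" using u unfolding forest_def by blast
  have cc: "c \<in> F" "snd c = h'" using CS_F P_CS wj c(1) by blast+
  show uF: "u \<in> F" using F_anc[OF cc(1) c(2)] .
  show su: "snd u \<le> h'" using pt_anc_D[OF mt1 c(2)] cc by simp
  have "up T1 u h' = c" using up_eq[OF mt1 c(2)] cc by simp
  then show s: "sel (up T1 u h') = wj" using sel_eq[OF wj c(1)] by simp
  show "al u = A wj u" using low(4)[OF uF su] s by simp
qed

lemma mid: assumes u: "u \<in> F" "h' < snd u" "snd u < h"
  shows "(fst u, h') \<in> CS" "sel (fst u, h') \<in> CW" "(fst u, h') \<in> P (sel (fst u, h'))"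
    "pt_anc T1 u (fst u, h')"
    "al u = up T2 (sel (fst u, h')) (snd u + \<delta>)"
    "pt_anc T2 (al u) (sel (fst u, h'))" "snd (al u) = snd u + \<delta>" "al u \<in> pts T2"
proof -
  show c: "(fst u, h') \<in> CS" "pt_anc T1 u (fst u, h')" using F3[OF u] by auto
  show s: "sel (fst u, h') \<in> CW" "(fst u, h') \<in> P (sel (fst u, h'))" using sel_ok[OF c(1)] by auto
  show e: "al u = up T2 (sel (fst u, h')) (snd u + \<delta>)" using u unfolding al_def by simp
  have w1: "sel (fst u, h') \<in> pts T2" "snd (sel (fst u, h')) \<le> snd u + \<delta>" using CW_W[OF s(1)] u by auto
  show "pt_anc T2 (al u) (sel (fst u, h'))" "snd (al u) = snd u + \<delta>" "al u \<in> pts T2"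
    using up_prop[OF mt2 w1] e pt_anc_D[OF mt2] by auto
qed

lemma top: "u \<in> F \<Longrightarrow> snd u = h \<Longrightarrow> al u = w"
  using hh unfolding al_def by simp

lemma w_pt: "pt_anc T2 w w" using pt_anc_refl[OF mt2 Sfacts(1)] .

lemma al_sub: assumes u: "u \<in> F" shows "al u \<in> subtree T2 w" "snd (al u) = snd u + \<delta>"
proof -
  have "al u \<in> subtree T2 w \<and> snd (al u) = snd u + \<delta>"
  proof (cases "snd u \<le> h'")
    case True
    note l = low[OF u True]
    have ne: "P (sel (up T1 u h')) \<noteq> {}" using l(2) by blast
    have "al u \<in> subtree T2 (sel (up T1 u h'))" using A_im[OF l(1) ne l(3)] l(4) by simp
    moreover have "pt_anc T2 w (sel (up T1 u h'))" using CW_W[OF l(1)] by blast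
    ultimately show ?thesis using sub_trans A_ht[OF l(1) ne l(3)] l(4) by auto
  next
    case False
    show ?thesis
    proof (cases "snd u < h")
      case True
      note m = mid[OF u _ True]
      have sw: "pt_anc T2 w (sel (fst u, h'))" using CW_W m(2) False by auto
      have "pt_anc T2 w (al u)" using pt_anc_chain[OF mt2 sw m(6)] m(7) Sfacts(2) True False by simp
      then show ?thesis unfolding subtree_def using m False by auto
    next
      case False
      then have "snd u = h" using F1[OF u] by auto
      then show ?thesis using top[OF u] w_pt Sfacts unfolding subtree_def by auto
    qed
  qed
  then show "al u \<in> subtree T2 w" "snd (al u) = snd u + \<delta>" by auto
qed

lemma al_pts: "u \<in> F \<Longrightarrow> al u \<in> pts T2" using al_sub W1 by blast

lemma UOP: assumes u1: "u1 \<in> F" and u2: "u2 \<in> F" and a: "pt_anc T1 u2 u1" and hl: "h' \<le> snd u1"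
  shows "pt_anc T2 (al u2) (al u1)"
proof (cases "snd u2 = h")
  case True
  then show ?thesis using top[OF u2] al_sub(1)[OF u1] unfolding subtree_def by auto
next
  case False
  then have s2: "snd u2 < h" using F1[OF u2] by auto
  have s12: "snd u1 \<le> snd u2" using pt_anc_D[OF mt1 a] by blast
  show ?thesis
  proof (cases "snd u2 = h'")
    case True
    then have "snd u1 = snd u2" using s12 hl by simp
    have "u2 = up T1 u1 (snd u2)" using up_eq[OF mt1 a] by simp
    also have "\<dots> = up T1 u1 (snd u1)" using \<open>snd u1 = snd u2\<close> by simp
    also have "\<dots> = u1" using up_self[OF mt1] F1[OF u1] by blast
    finally have "u1 = u2" by simp
    then show ?thesis using pt_anc_refl[OF mt2 al_pts[OF u1]] by simp
  next
    case False
    then have s2': "h' < snd u2" using hl s12 by simp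
    have f: "fst u1 = fst u2" using Sgap[OF _ s2 a hl] F1[OF u2] by blast
    note m2 = mid[OF u2 s2' s2]
    show ?thesis
    proof (cases "snd u1 = h'")
      case True
      then have "u1 = (fst u2, h')" using f by (simp add: prod_eq_iff)
      have "up T1 u1 (snd u1) = u1" using up_self[OF mt1] F1[OF u1] by blast
      then have "up T1 u1 h' = u1" using True by simp
      then have "al u1 = A (sel u1) u1" using low(4)[OF u1] True by simp
      then have "al u1 = sel (fst u2, h')"
        using A_c[OF m2(2,3)] \<open>u1 = (fst u2, h')\<close> by simp
      then show ?thesis using m2(6) by simp
    next
      case False
      then have s1: "h' < snd u1" using hl by simp
      have "snd u1 < h" using s12 s2 by simp
      note m1 = mid[OF u1 s1 this]
      have q: "pt_anc T2 (al u2) (sel (fst u2, h'))" "pt_anc T2 (al u1) (sel (fst u2, h'))"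
        using m1(6) m2(6) f by auto
      have "snd (al u1) \<le> snd (al u2)" using m1(7) m2(7) s12 by simp
      then show ?thesis using pt_anc_chain[OF mt2 q] by blast
    qed
  qed
qed

end


context stpf begin

lemma topA: assumes u: "u \<in> F" and s0: "s0 \<in> S"
  shows "pt_anc T1 (up T1 s0 (h + 2 * \<delta>)) (up T1 u (snd u + 2 * \<delta>))"
proof -
  obtain s where s: "s \<in> S" "pt_anc T1 s u" using F1[OF u] by blast
  have eq: "up T1 s (h + 2 * \<delta>) = up T1 s0 (h + 2 * \<delta>)" using Sfacts(5) s(1) s0 by blast
  have sp: "s \<in> pts T1" "snd s = h" using S_pts[OF s(1)] by auto
  have "pt_anc T1 (up T1 s (h + 2 * \<delta>)) s" using up_prop(1)[OF mt1 sp(1)] sp(2) dpos by simp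
  then have a: "pt_anc T1 (up T1 s (h + 2 * \<delta>)) u" using pt_anc_trans[OF mt1 _ s(2)] by blast
  have up: "u \<in> pts T1" "snd u \<le> h" using F1[OF u] by auto
  have b: "pt_anc T1 (up T1 u (snd u + 2 * \<delta>)) u" "snd (up T1 u (snd u + 2 * \<delta>)) = snd u + 2 * \<delta>"
    using up_prop[OF mt1 up(1)] dpos by auto
  have "snd (up T1 s (h + 2 * \<delta>)) = h + 2 * \<delta>" using up_prop(2)[OF mt1 sp(1)] sp(2) dpos by simp
  then have "pt_anc T1 (up T1 s (h + 2 * \<delta>)) (up T1 u (snd u + 2 * \<delta>))"
    using pt_anc_chain[OF mt1 a b(1)] b(2) up(2) by simp
  then show ?thesis using eq by simp
qed

lemma al_P2: assumes u1: "u1 \<in> F" and u2: "u2 \<in> F" and a: "pt_anc T2 (al u1) (al u2)"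
  shows "pt_anc T1 (up T1 u1 (snd u1 + 2 * \<delta>)) (up T1 u2 (snd u2 + 2 * \<delta>))"
proof -
  have s21: "snd u2 \<le> snd u1" using pt_anc_D[OF mt2 a] al_sub(2)[OF u1] al_sub(2)[OF u2] by simp
  have u1p: "u1 \<in> pts T1" and u2p: "u2 \<in> pts T1" using F1 u1 u2 by auto
  have U1: "pt_anc T1 (up T1 u1 (snd u1 + 2 * \<delta>)) u1" "snd (up T1 u1 (snd u1 + 2 * \<delta>)) = snd u1 + 2 * \<delta>"
    using up_prop[OF mt1 u1p] dpos by auto
  have U2: "pt_anc T1 (up T1 u2 (snd u2 + 2 * \<delta>)) u2" "snd (up T1 u2 (snd u2 + 2 * \<delta>)) = snd u2 + 2 * \<delta>"
    using up_prop[OF mt1 u2p] dpos by auto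
  show ?thesis
  proof (cases "snd u1 = h")
    case True
    then show ?thesis using topA[OF u2 F4[OF u1 True]] by simp
  next
    case False
    then have s1h: "snd u1 < h" using F1[OF u1] by auto
    show ?thesis
    proof (cases "snd u1 \<le> h'")
      case True
      then have s2: "snd u2 \<le> h'" using s21 by simp
      note l1 = low[OF u1 True] and l2 = low[OF u2 s2]
      let ?w1 = "sel (up T1 u1 h')" and ?w2 = "sel (up T1 u2 h')"
      have ne1: "P ?w1 \<noteq> {}" and ne2: "P ?w2 \<noteq> {}" using l1(2) l2(2) by blast+
      have b1: "pt_anc T2 ?w1 (al u1)" using A_im[OF l1(1) ne1 l1(3)] l1(4) unfolding subtree_def by simp
      have b2: "pt_anc T2 ?w2 (al u2)" using A_im[OF l2(1) ne2 l2(3)] l2(4) unfolding subtree_def by simp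
      have "pt_anc T2 ?w1 (al u2)" using pt_anc_trans[OF mt2 b1 a] .
      then have "?w1 = ?w2" using up_unique[OF mt2 _ b2] CW_W[OF l1(1)] CW_W[OF l2(1)] by simp
      then have "u2 \<in> forest T1 (P ?w1)" using l2(3) by simp
      moreover have "pt_anc T2 (A ?w1 u1) (A ?w1 u2)" using a l1(4) l2(4) \<open>?w1 = ?w2\<close> by simp
      ultimately show ?thesis using A_P2[OF l1(1) ne1 l1(3)] by blast
    next
      case False
      then have s1: "h' < snd u1" by simp
      note m1 = mid[OF u1 s1 s1h]
      let ?c1 = "(fst u1, h')" and ?w1 = "sel (fst u1, h')"
      have a1: "al u1 \<in> pts T2" "snd (al u1) < h + \<delta>" using m1 s1h by auto
      have c1: "?c1 \<in> pts T1" "snd ?c1 = h'" using CS_F[OF m1(1)] by auto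
      have M1: "pt_anc T1 (up T1 ?c1 (h' + 2 * \<delta>)) ?c1" "snd (up T1 ?c1 (h' + 2 * \<delta>)) = h' + 2 * \<delta>"
        using up_prop[OF mt1 c1(1)] c1(2) dpos by auto
      have U1c: "pt_anc T1 (up T1 u1 (snd u1 + 2 * \<delta>)) ?c1" using pt_anc_trans[OF mt1 U1(1) m1(4)] .
      have U1M: "pt_anc T1 (up T1 u1 (snd u1 + 2 * \<delta>)) (up T1 ?c1 (h' + 2 * \<delta>))"
        using pt_anc_chain[OF mt1 U1c M1(1)] M1(2) U1(2) s1 by simp
      show ?thesis
      proof (cases "snd u2 \<le> h'")
        case True
        note l2 = low[OF u2 True]
        let ?c2 = "up T1 u2 h'" and ?w2 = "sel (up T1 u2 h')"
        have ne2: "P ?w2 \<noteq> {}" using l2(2) by blast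
        have b2: "pt_anc T2 ?w2 (al u2)" using A_im[OF l2(1) ne2 l2(3)] l2(4) unfolding subtree_def by simp
        have "pt_anc T2 (al u1) ?w2"
          using pt_anc_chain[OF mt2 a b2] CW_W[OF l2(1)] m1(7) s1 by simp
        then have "?w1 = ?w2" using Wgap[OF a1 m1(6)] CW_W[OF l2(1)] CW_W[OF m1(2)] by blast
        then have "up T1 ?c1 (h' + 2 * \<delta>) = up T1 ?c2 (h' + 2 * \<delta>)"
          using Pups[OF m1(2) m1(3)] l2(2) by simp
        moreover have c2: "pt_anc T1 ?c2 u2" "?c2 \<in> pts T1" "snd ?c2 = h'"
          using F2[OF u2 True] CS_F[OF F2(1)[OF u2 True]] by auto
        moreover have "pt_anc T1 (up T1 ?c2 (h' + 2 * \<delta>)) ?c2"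
          using up_prop(1)[OF mt1 c2(2)] c2(3) dpos by simp
        ultimately have "pt_anc T1 (up T1 ?c1 (h' + 2 * \<delta>)) ?c2" by simp
        then have q: "pt_anc T1 (up T1 ?c1 (h' + 2 * \<delta>)) u2" using pt_anc_trans[OF mt1 _ c2(1)] by blast
        have "snd (up T1 u2 (snd u2 + 2 * \<delta>)) \<le> snd (up T1 ?c1 (h' + 2 * \<delta>))" using U2(2) M1(2) True by simp
        then have "pt_anc T1 (up T1 ?c1 (h' + 2 * \<delta>)) (up T1 u2 (snd u2 + 2 * \<delta>))"
          using pt_anc_chain[OF mt1 q U2(1)] by blast
        then show ?thesis using pt_anc_trans[OF mt1 U1M] by blast
      next
        case False
        then have s2: "h' < snd u2" "snd u2 < h" using s21 s1h by auto
        note m2 = mid[OF u2 s2]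
        let ?c2 = "(fst u2, h')" and ?w2 = "sel (fst u2, h')"
        have "pt_anc T2 (al u1) ?w2" using pt_anc_trans[OF mt2 a m2(6)] .
        then have "?w1 = ?w2" using Wgap[OF a1 m1(6)] CW_W[OF m2(2)] CW_W[OF m1(2)] by blast
        then have eqM: "up T1 ?c1 (h' + 2 * \<delta>) = up T1 ?c2 (h' + 2 * \<delta>)"
          using Pups[OF m1(2) m1(3)] m2(3) by simp
        have c2: "?c2 \<in> pts T1" "snd ?c2 = h'" using CS_F[OF m2(1)] by auto
        have "pt_anc T1 (up T1 ?c2 (h' + 2 * \<delta>)) ?c2" using up_prop(1)[OF mt1 c2(1)] c2(2) dpos by simp
        then have "pt_anc T1 (up T1 ?c1 (h' + 2 * \<delta>)) ?c2" using eqM by simp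
        then have q1: "pt_anc T1 (up T1 u1 (snd u1 + 2 * \<delta>)) ?c2" using pt_anc_trans[OF mt1 U1M] by blast
        have q2: "pt_anc T1 (up T1 u2 (snd u2 + 2 * \<delta>)) ?c2" using pt_anc_trans[OF mt1 U2(1) m2(4)] .
        have "snd (up T1 u2 (snd u2 + 2 * \<delta>)) \<le> snd (up T1 u1 (snd u1 + 2 * \<delta>))" using U1(2) U2(2) s21 by simp
        then show ?thesis using pt_anc_chain[OF mt1 q1 q2] by blast
      qed
    qed
  qed
qed

lemma forest_anc: "u \<in> forest T1 Q \<Longrightarrow> pt_anc T1 u v \<Longrightarrow> v \<in> forest T1 Q"
  unfolding forest_def using pt_anc_trans[OF mt1] pt_anc_D[OF mt1] by blast

lemma w_im: "w \<in> al ` F"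
proof -
  obtain s where s: "s \<in> S" using Sfacts(3) by blast
  then have "s \<in> F" "snd s = h" using S_F S_pts by auto
  then have "w = al s" using top by simp
  then show ?thesis using image_eqI \<open>s \<in> F\<close> by blast
qed

lemma H1: assumes u: "u \<in> F" "snd u \<le> h'" and wz: "wz \<in> CW"
  and a: "pt_anc T2 (al u) z" and b: "pt_anc T2 wz z"
  shows "sel (up T1 u h') = wz"
proof -
  note l = low[OF u]
  have ne: "P (sel (up T1 u h')) \<noteq> {}" using l(2) by blast
  have "pt_anc T2 (sel (up T1 u h')) (al u)" using A_im[OF l(1) ne l(3)] l(4) unfolding subtree_def by simp
  then have "pt_anc T2 (sel (up T1 u h')) z" using pt_anc_trans[OF mt2 _ a] by blast
  then show ?thesis using up_unique[OF mt2 _ b] CW_W[OF l(1)] CW_W[OF wz] by simp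
qed

lemma H2: assumes u: "u \<in> F" "h' < snd u" "snd u < h" and wz: "wz \<in> CW"
  and a: "pt_anc T2 (al u) wz"
  shows "sel (fst u, h') = wz"
proof -
  note m = mid[OF u]
  have "snd (al u) < h + \<delta>" using m(7) u by simp
  then show ?thesis using Wgap[OF m(8) _ m(6) a] CW_W[OF m(2)] CW_W[OF wz] by simp
qed

lemma al_P3: assumes z: "z \<in> subtree T2 w - al ` F"
  shows "\<exists>zF. zF \<in> al ` F \<and> pt_anc T2 zF z \<and> (\<forall>y\<in>al ` F. pt_anc T2 y z \<longrightarrow> pt_anc T2 y zF) \<and>
    \<bar>snd zF - snd z\<bar> \<le> 2 * \<delta>"
proof -
  have zw: "z \<in> pts T2" "snd z \<le> h + \<delta>" "pt_anc T2 w z" using W1 z by auto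
  have ni: "z \<notin> al ` F" using z by blast
  have toW: "\<exists>zF. zF \<in> al ` F \<and> pt_anc T2 zF z \<and> (\<forall>y\<in>al ` F. pt_anc T2 y z \<longrightarrow> pt_anc T2 y zF) \<and>
    \<bar>snd zF - snd z\<bar> \<le> 2 * \<delta>"
    if ab: "h + \<delta> - snd z \<le> 2 * \<delta>"
    and mn: "\<And>u. u \<in> F \<Longrightarrow> pt_anc T2 (al u) z \<Longrightarrow> snd u < h \<Longrightarrow> False"
  proof (intro exI conjI ballI impI)
    show "w \<in> al ` F" by (rule w_im)
    show "pt_anc T2 w z" by (rule zw(3))
    show "\<bar>snd w - snd z\<bar> \<le> 2 * \<delta>" using ab zw(2) Sfacts(2) by simp
  next
    fix y assume y: "y \<in> al ` F" "pt_anc T2 y z"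
    then obtain u where u: "u \<in> F" "y = al u" by blast
    have "snd u = h" using mn[OF u(1)] y(2) u(2) F1[OF u(1)] by force
    then show "pt_anc T2 y w" using top[OF u(1)] u(2) w_pt by simp
  qed
  have zne: "snd z \<noteq> h + \<delta>" using W4[of z] z w_im by auto
  show ?thesis
  proof (cases "snd z \<le> h' + \<delta>")
    case True
    note w2 = W2[OF _ True]
    let ?wz = "up T2 z (h' + \<delta>)"
    have wz: "?wz \<in> CW" "pt_anc T2 ?wz z" using w2 z by auto
    show ?thesis
    proof (cases "P ?wz = {}")
      case False
      let ?Fz = "forest T1 (P ?wz)"
      have zs: "z \<in> subtree T2 ?wz" using wz zw unfolding subtree_def by blast
      have "z \<notin> A ?wz ` ?Fz"
      proof
        assume "z \<in> A ?wz ` ?Fz"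
        then obtain u where u: "u \<in> ?Fz" "z = A ?wz u" by blast
        then show False using low'[OF wz(1) u(1)] ni by force
      qed
      then obtain zF where zF: "zF \<in> A ?wz ` ?Fz" "pt_anc T2 zF z"
          "\<forall>y\<in>A ?wz ` ?Fz. pt_anc T2 y z \<longrightarrow> pt_anc T2 y zF" "\<bar>snd zF - snd z\<bar> \<le> 2 * \<delta>"
        using A_P3[OF wz(1) False] zs by blast
      obtain u0 where u0: "u0 \<in> ?Fz" "zF = A ?wz u0" using zF(1) by blast
      have zFal: "zF \<in> al ` F" using low'[OF wz(1) u0(1)] u0(2) by force
      have zFh: "snd zF \<le> h' + \<delta>" using A_im[OF wz(1) False u0(1)] u0(2) CW_W[OF wz(1)]
        pt_anc_D[OF mt2] unfolding subtree_def by fastforce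
      show ?thesis
      proof (intro exI conjI ballI impI)
        show "zF \<in> al ` F" "pt_anc T2 zF z" "\<bar>snd zF - snd z\<bar> \<le> 2 * \<delta>" using zFal zF by auto
      next
        fix y assume y: "y \<in> al ` F" "pt_anc T2 y z"
        show "pt_anc T2 y zF"
        proof (cases "snd zF \<le> snd y")
          case True
          then show ?thesis using pt_anc_chain[OF mt2 y(2) zF(2)] by blast
        next
          case False
          obtain u where u: "u \<in> F" "y = al u" using y(1) by blast
          have su: "snd u \<le> h'" using False zFh al_sub(2)[OF u(1)] u(2) by simp
          have "sel (up T1 u h') = ?wz" using H1[OF u(1) su wz(1) _ wz(2)] y(2) u(2) by simp
          then have "u \<in> ?Fz" "al u = A ?wz u" using low[OF u(1) su] by auto
          then have "y \<in> A ?wz ` ?Fz" using u(2) by simp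
          then show ?thesis using zF(3) y(2) by blast
        qed
      qed
    next
      case True
      show ?thesis
      proof (rule toW)
        have "snd ?wz - snd z \<le> depth T2 ?wz" using depth_ge[OF mt2 wz(2)] .
        then show "h + \<delta> - snd z \<le> 2 * \<delta>" using G2[OF wz(1) True] CW_W[OF wz(1)] by simp
      next
        fix u assume u: "u \<in> F" "pt_anc T2 (al u) z" "snd u < h"
        show False
        proof (cases "snd u \<le> h'")
          case True
          have "sel (up T1 u h') = ?wz" using H1[OF u(1) True wz(1) u(2) wz(2)] .
          then show False using low(2)[OF u(1) True] \<open>P ?wz = {}\<close> by simp
        next
          case False
          then have su: "h' < snd u" by simp
          have "pt_anc T2 (al u) ?wz"
            using pt_anc_chain[OF mt2 u(2) wz(2)] CW_W[OF wz(1)] mid(7)[OF u(1) su u(3)] su by simp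
          then have "sel (fst u, h') = ?wz" using H2[OF u(1) su u(3) wz(1)] by blast
          then show False using mid(3)[OF u(1) su u(3)] \<open>P ?wz = {}\<close> by simp
        qed
      qed
    qed
  next
    case False
    then have zh: "h' + \<delta> < snd z" "snd z < h + \<delta>" using zw(2) zne by auto
    note w3 = W3[OF _ zh]
    let ?wz = "(fst z, h' + \<delta>)"
    have wz: "?wz \<in> CW" "pt_anc T2 z ?wz" using w3 z by auto
    have PE: "P ?wz = {}"
    proof (rule ccontr)
      assume "P ?wz \<noteq> {}"
      then obtain c0 where c0: "c0 \<in> P ?wz" by blast
      have c0F: "c0 \<in> F" "snd c0 = h'" "c0 \<in> pts T1" using CS_F P_CS[OF wz(1)] c0 by blast+
      let ?t = "snd z - \<delta>"
      have t: "h' < ?t" "?t < h" using zh by auto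
      let ?u = "up T1 c0 ?t"
      have uF: "?u \<in> F" using F_up[OF c0F(1)] t c0F(2) by simp
      have up: "pt_anc T1 ?u c0" "snd ?u = ?t" using up_prop[OF mt1 c0F(3)] t c0F(2) by auto
      have "fst c0 = fst ?u" using Sgap[OF _ _ up(1)] F1[OF uF] up(2) t c0F(2) by simp
      then have ce: "(fst ?u, h') = c0" using c0F(2) by (simp add: prod_eq_iff)
      have "al ?u = up T2 (sel (fst ?u, h')) (snd ?u + \<delta>)" using mid(5)[OF uF] up(2) t by simp
      also have "\<dots> = up T2 ?wz (snd z)" using ce sel_eq[OF wz(1) c0] up(2) by simp
      also have "\<dots> = z" using up_eq[OF mt2 wz(2)] by simp
      finally have "z = al ?u" by simp
      then have "z \<in> al ` F" using image_eqI uF by blast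
      then show False using ni by blast
    qed
    show ?thesis
    proof (rule toW)
      have "0 \<le> depth T2 ?wz" using depth_ge[OF mt2 pt_anc_refl[OF mt2]] CW_W[OF wz(1)] by fastforce
      then show "h + \<delta> - snd z \<le> 2 * \<delta>" using G2[OF wz(1) PE] zh by simp
    next
      fix u assume u: "u \<in> F" "pt_anc T2 (al u) z" "snd u < h"
      have "snd z \<le> snd (al u)" using pt_anc_D[OF mt2 u(2)] by blast
      then have su: "h' < snd u" using al_sub(2)[OF u(1)] zh by simp
      have "pt_anc T2 (al u) ?wz" using pt_anc_trans[OF mt2 u(2) wz(2)] .
      then have "sel (fst u, h') = ?wz" using H2[OF u(1) su u(3) wz(1)] by blast
      then show False using mid(3)[OF u(1) su u(3)] PE by simp
    qed
  qed
qed

lemma al_cont: "tcontinuous_on T1 T2 F al"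
  unfolding tcontinuous_on_def
proof (intro ballI allI impI)
  fix x and e :: real assume x: "x \<in> F" and e: "e > 0"
  have xp: "x \<in> pts T1" using F1[OF x] by blast
  obtain \<epsilon> where eps: "\<epsilon> > 0" "\<forall>y\<in>pts T1. tdist T1 x y < \<epsilon> \<longrightarrow> pt_anc T1 x y \<or> pt_anc T1 y x"
    using LC[OF mt1 xp] by blast
  have upper: "tdist T2 (al x) (al y) < e" if y: "y \<in> F" "pt_anc T1 y x" "h' \<le> snd x" "tdist T1 x y < e" for y
  proof -
    have "pt_anc T2 (al y) (al x)" using UOP[OF x y(1,2,3)] .
    then have "tdist T2 (al x) (al y) = snd (al y) - snd (al x)" using tdist_anc(2)[OF mt2] by blast
    also have "\<dots> = snd y - snd x" using al_sub(2)[OF x] al_sub(2)[OF y(1)] by simp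
    also have "\<dots> = tdist T1 x y" using tdist_anc(2)[OF mt1 y(2)] by simp
    finally show ?thesis using y(4) by simp
  qed
  have upper2: "tdist T2 (al x) (al y) < e" if y: "y \<in> F" "pt_anc T1 x y" "h' \<le> snd y" "tdist T1 x y < e" for y
  proof -
    have "pt_anc T2 (al x) (al y)" using UOP[OF y(1) x y(2,3)] .
    then have "tdist T2 (al x) (al y) = snd (al x) - snd (al y)" using tdist_anc(1)[OF mt2] by blast
    also have "\<dots> = snd x - snd y" using al_sub(2)[OF x] al_sub(2)[OF y(1)] by simp
    also have "\<dots> = tdist T1 x y" using tdist_anc(1)[OF mt1 y(2)] by simp
    finally show ?thesis using y(4) by simp
  qed
  show "\<exists>d>0. \<forall>y\<in>F. tdist T1 x y < d \<longrightarrow> tdist T2 (al x) (al y) < e"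
  proof (cases "snd x \<le> h'")
    case True
    note l = low[OF x True]
    let ?wj = "sel (up T1 x h')"
    have ne: "P ?wj \<noteq> {}" using l(2) by blast
    obtain dj where dj: "dj > 0" "\<forall>y\<in>forest T1 (P ?wj). tdist T1 x y < dj \<longrightarrow>
        tdist T2 (A ?wj x) (A ?wj y) < e"
      using A_cont[OF l(1) ne] l(3) e unfolding tcontinuous_on_def by blast
    define d where "d = min (min \<epsilon> dj) (if snd x < h' then min e (h' - snd x) else e)"
    have d0: "d > 0" using eps dj e by (auto simp: d_def)
    show ?thesis
    proof (intro exI conjI ballI impI)
      show "d > 0" by (rule d0)
    next
      fix y assume y: "y \<in> F" and td: "tdist T1 x y < d"
      have yp: "y \<in> pts T1" using F1[OF y] by blast
      have cmp: "pt_anc T1 x y \<or> pt_anc T1 y x" using eps(2) yp td by (auto simp: d_def)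
      have inj: "tdist T2 (al x) (al y) < e" if yF: "y \<in> forest T1 (P ?wj)"
      proof -
        have "al y = A ?wj y" using low'[OF l(1) yF] by simp
        moreover have "tdist T1 x y < dj" using td by (auto simp: d_def)
        ultimately show ?thesis using dj(2) yF l(4) by simp
      qed
      show "tdist T2 (al x) (al y) < e"
        using cmp
      proof
        assume "pt_anc T1 x y"
        then show ?thesis using inj forest_anc[OF l(3)] by blast
      next
        assume yx: "pt_anc T1 y x"
        have tdy: "tdist T1 x y = snd y - snd x" using tdist_anc(2)[OF mt1 yx] .
        show ?thesis
        proof (cases "snd y \<le> h'")
          case True
          have "up T1 x h' = up T1 y h'" using up_mono[OF mt1 yx True] .
          then show ?thesis using inj low(3)[OF y True] by simp
        next
          case False
          have "\<not> snd x < h'"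
          proof
            assume "snd x < h'"
            then have "d \<le> h' - snd x" by (simp add: d_def)
            then show False using td tdy False by simp
          qed
          then have "h' \<le> snd x" by simp
          moreover have "tdist T1 x y < e" using td by (auto simp: d_def split: if_splits)
          ultimately show ?thesis using upper[OF y yx] by blast
        qed
      qed
    qed
  next
    case False
    define d where "d = min \<epsilon> (min (snd x - h') e)"
    have d0: "d > 0" using eps e False by (auto simp: d_def)
    show ?thesis
    proof (intro exI conjI ballI impI)
      show "d > 0" by (rule d0)
    next
      fix y assume y: "y \<in> F" and td: "tdist T1 x y < d"
      have yp: "y \<in> pts T1" using F1[OF y] by blast
      have cmp: "pt_anc T1 x y \<or> pt_anc T1 y x" using eps(2) yp td by (auto simp: d_def)
      have tde: "tdist T1 x y < e" using td by (simp add: d_def)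
      show "tdist T2 (al x) (al y) < e"
        using cmp
      proof
        assume xy: "pt_anc T1 x y"
        have "tdist T1 x y = snd x - snd y" using tdist_anc(1)[OF mt1 xy] .
        then have "h' \<le> snd y" using td by (simp add: d_def)
        then show ?thesis using upper2[OF y xy _ tde] by blast
      next
        assume yx: "pt_anc T1 y x"
        then show ?thesis using upper[OF y yx _ tde] False by simp
      qed
    qed
  qed
qed

lemma fwd: "\<exists>\<alpha>. partial_good T1 T2 \<delta> S w \<alpha>"
proof -
  have "partial_good T1 T2 \<delta> S w al"
    unfolding partial_good_def
  proof (intro conjI ballI impI)
    show "al ` F \<subseteq> subtree T2 w" using al_sub(1) by blast
    show "tcontinuous_on T1 T2 F al" by (rule al_cont)
    show "\<And>u. u \<in> F \<Longrightarrow> snd (al u) = snd u + \<delta>" using al_sub(2) by blast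
    show "\<And>u1 u2. u1 \<in> F \<Longrightarrow> u2 \<in> F \<Longrightarrow> pt_anc T2 (al u1) (al u2) \<Longrightarrow>
        pt_anc T1 (up T1 u1 (snd u1 + 2 * \<delta>)) (up T1 u2 (snd u2 + 2 * \<delta>))" by (rule al_P2)
    show "\<And>z. z \<in> subtree T2 w - al ` F \<Longrightarrow> \<exists>zF. zF \<in> al ` F \<and> pt_anc T2 zF z \<and>
        (\<forall>y\<in>al ` F. pt_anc T2 y z \<longrightarrow> pt_anc T2 y zF) \<and> \<bar>snd zF - snd z\<bar> \<le> 2 * \<delta>" by (rule al_P3)
  qed
  then show ?thesis by blast
qed

end

context fixes T1 :: "'a mtree" and T2 :: "'b mtree" and \<delta> :: real
  assumes mt1: "merge_tree T1" and mt2: "merge_tree T2" and dpos: "\<delta> > 0"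
begin

lemma step_bwd: assumes Si: "Suc i < length (hs T1 T2 \<delta>)" and vp: "vp_at T1 T2 \<delta> (Suc i) S w"
  and IH: "\<And>S' w'. vp_at T1 T2 \<delta> i S' w' \<Longrightarrow> feas T1 T2 \<delta> i S' w' \<longleftrightarrow> (\<exists>\<alpha>. partial_good T1 T2 \<delta> S' w' \<alpha>)"
  and good: "partial_good T1 T2 \<delta> S w \<alpha>"
  shows "\<exists>P. goodP T1 T2 \<delta> i S w P"
  using stp.bwd[OF stp.intro[OF mt1 mt2 dpos Si vp] IH good] .

lemma step_fwd: assumes Si: "Suc i < length (hs T1 T2 \<delta>)" and vp: "vp_at T1 T2 \<delta> (Suc i) S w"
  and IH: "\<And>S' w'. vp_at T1 T2 \<delta> i S' w' \<Longrightarrow> feas T1 T2 \<delta> i S' w' \<longleftrightarrow> (\<exists>\<alpha>. partial_good T1 T2 \<delta> S' w' \<alpha>)"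
  and gP: "goodP T1 T2 \<delta> i S w P"
  shows "\<exists>\<alpha>. partial_good T1 T2 \<delta> S w \<alpha>"
  using stpf.fwd[OF stpf.intro[OF stp.intro[OF mt1 mt2 dpos Si vp] stpf_axioms.intro[OF gP IH]]] .

lemma main: "i < length (hs T1 T2 \<delta>) \<Longrightarrow> vp_at T1 T2 \<delta> i S w \<Longrightarrow>
    feas T1 T2 \<delta> i S w \<longleftrightarrow> (\<exists>\<alpha>. partial_good T1 T2 \<delta> S w \<alpha>)"
proof (induction i arbitrary: S w)
  case 0
  then show ?case using base_case[OF mt1 mt2 dpos] by blast
next
  case (Suc i)
  have IH: "\<And>S' w'. vp_at T1 T2 \<delta> i S' w' \<Longrightarrow> feas T1 T2 \<delta> i S' w' \<longleftrightarrow> (\<exists>\<alpha>. partial_good T1 T2 \<delta> S' w' \<alpha>)"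
    using Suc.IH Suc.prems(1) by simp
  show ?case unfolding feas_Suc_iff
    using step_bwd[OF Suc.prems IH] step_fwd[OF Suc.prems IH] by blast
qed

end

theorem lemma1:
  fixes T1 :: "'a mtree" and T2 :: "'b mtree" and \<delta> :: real
    and S :: "('a \<times> real) set" and w :: "'b \<times> real"
  assumes "merge_tree T1" and "merge_tree T2" and "\<delta> > 0"
    and "valid_pair T1 T2 \<delta> S w"
  shows "Feas T1 T2 \<delta> S w \<longleftrightarrow> (\<exists>\<alpha>. partial_good T1 T2 \<delta> S w \<alpha>)"
proof -
  obtain j where j: "j < length (hs T1 T2 \<delta>)" "w \<in> lev T2 (hs T1 T2 \<delta> ! j + \<delta>)"
    using assms(4) unfolding valid_pair_def by blast
  have sw: "snd w = hs T1 T2 \<delta> ! j + \<delta>" using j(2) by (simp add: lev_def)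
  have "(THE j. j < length (hs T1 T2 \<delta>) \<and> snd w = hs T1 T2 \<delta> ! j + \<delta>) = j"
    using j(1) sw hs_inj[OF assms(1,2)] by (intro the_equality) auto
  then have "Feas T1 T2 \<delta> S w = feas T1 T2 \<delta> j S w" unfolding Feas_def by simp
  moreover have "vp_at T1 T2 \<delta> j S w" using valid_vp[OF assms(1-3,4) j(1) sw] .
  ultimately show ?thesis using main[OF assms(1-3) j(1)] by simp
qed


end
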